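(* Let $\kappa\ge1$, $n\ge1$ be integers and $0<\epsilon<1$. Let $\bar q\in\mathbb{R}^{2^\kappa}$ be the uniform vector fraction code: $\bar q_0=0$ and $\bar q_i=\frac{1}{2^\kappa-1}$ for $1\le i\le 2^\kappa-1$. Then $\bar q$ is a local minimizer of $q\mapsto l(n,\epsilon,q)$ on $\mathcal{C}=\{q\in\mathbb{R}^{2^\kappa}: q_i\ge0\ \forall i,\ \sum_i q_i=1\}$.
   Context: $W=\mathbb{F}_2^\kappa$; $\nu(i)\in W$ is the binary expansion of $i\in\{0,\dots,2^\kappa-1\}$; vectors $q\in\mathbb{R}^{2^\kappa}$ are indexed $q_0,\dots,q_{2^\kappa-1}$. For a subspace $S\subseteq W$, $\zeta(S,q)=\sum_{i:\nu(i)\in S}q_i$; $\Xi(W,d)$ is the set of $d$-dimensional subspaces of $W$. For real $q$, the (continuous) expected equivocation loss is $l(n,\epsilon,q)=n(1-\epsilon)-\kappa+\sum_{\delta=1}^{\kappa}K_\delta\sum_{S\in\Xi(W,\kappa-\delta)}\epsilon^{n(1-\zeta(S,q))}$, with $K_\delta=\prod_{i=1}^{\delta-1}(1-2^i)$. (When $q_i$ is the fraction of columns of a $\kappa\times n$ generator matrix equal to $\nu(i)$, this is the expected equivocation loss of the coset code over a binary erasure channel with erasure probability $\epsilon$.) A local minimizer of $f$ on a set $\mathcal{C}$ is a point $q\in\mathcal{C}$ with $f(q)\le f(q')$ for all $q'\in\mathcal{C}$ in some neighborhood of $q$. *)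

theory Defs
  imports Complex_Main
begin

text \<open>We identify \<open>W = F_2^\<kappa>\<close> with \<open>{..<2^\<kappa>}\<close> via the binary expansion \<open>\<nu>\<close>;
  vector addition in \<open>W\<close> then corresponds to bitwise xor on naturals.
  A linear subspace of \<open>W\<close> (over \<open>F_2\<close>) is a set containing 0 and closed under
  addition; its dimension is \<open>d\<close> iff it has \<open>2^d\<close> elements.\<close>

definition is_subspace :: "nat \<Rightarrow> nat set \<Rightarrow> bool" where
  "is_subspace \<kappa> S \<longleftrightarrow> S \<subseteq> {..<2^\<kappa>} \<and> 0 \<in> S \<and> (\<forall>x\<in>S. \<forall>y\<in>S. xor x y \<in> S)"

definition Xi :: "nat \<Rightarrow> nat \<Rightarrow> nat set set" where
  "Xi \<kappa> d = {S. is_subspace \<kappa> S \<and> card S = 2^d}"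

definition zeta :: "nat set \<Rightarrow> (nat \<Rightarrow> real) \<Rightarrow> real" where
  "zeta S q = (\<Sum>i\<in>S. q i)"

definition Kc :: "nat \<Rightarrow> real" where
  "Kc \<delta> = (\<Prod>i=1..<\<delta>. 1 - 2^i)"

definition eq_loss :: "nat \<Rightarrow> nat \<Rightarrow> real \<Rightarrow> (nat \<Rightarrow> real) \<Rightarrow> real" where
  "eq_loss \<kappa> n \<epsilon> q = real n * (1 - \<epsilon>) - real \<kappa>
     + (\<Sum>\<delta>=1..\<kappa>. Kc \<delta> * (\<Sum>S\<in>Xi \<kappa> (\<kappa> - \<delta>). \<epsilon> powr (real n * (1 - zeta S q))))"

text \<open>Probability simplex on the coordinates \<open>0..2^\<kappa>-1\<close> (other coordinates irrelevant).\<close>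
definition simplexC :: "nat \<Rightarrow> (nat \<Rightarrow> real) set" where
  "simplexC \<kappa> = {q. (\<forall>i<2^\<kappa>. q i \<ge> 0) \<and> (\<Sum>i<2^\<kappa>. q i) = 1}"

definition local_minimizer_on :: "nat \<Rightarrow> ((nat \<Rightarrow> real) \<Rightarrow> real) \<Rightarrow> (nat \<Rightarrow> real) set \<Rightarrow> (nat \<Rightarrow> real) \<Rightarrow> bool" where
  "local_minimizer_on \<kappa> f C q \<longleftrightarrow> q \<in> C \<and>
     (\<exists>e>0. \<forall>q'\<in>C. (\<forall>i<2^\<kappa>. \<bar>q' i - q i\<bar> < e) \<longrightarrow> f q \<le> f q')"

definition qbar :: "nat \<Rightarrow> nat \<Rightarrow> real" where
  "qbar \<kappa> i = (if i = 0 then 0 else 1 / (2^\<kappa> - 1))"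

end

theory Submission
  imports Defs
begin

lemma lt_pow_iff_drop: "(x::nat) < 2^m \<longleftrightarrow> drop_bit m x = 0"
  by (simp add: drop_bit_eq_div div_eq_0_iff)

lemma xor_lt_pow: "(x::nat) < 2^m \<Longrightarrow> y < 2^m \<Longrightarrow> xor x y < 2^m"
  by (simp add: lt_pow_iff_drop)

lemma top_drop: "(x::nat) < 2^Suc c \<Longrightarrow> \<not> x < 2^c \<Longrightarrow> drop_bit c x = 1"
  by (simp add: drop_bit_eq_div) (metis div_eq_0_iff div_less_iff_less_mult less_2_cases_iff less_numeral_extra(3) mult.commute power_Suc zero_less_numeral zero_less_power)

lemma xor_tt: "(x::nat) < 2^Suc c \<Longrightarrow> \<not> x < 2^c \<Longrightarrow> y < 2^Suc c \<Longrightarrow> \<not> y < 2^c \<Longrightarrow> xor x y < 2^c"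
  by (simp add: lt_pow_iff_drop top_drop)

lemma xor_tl: "(x::nat) < 2^Suc c \<Longrightarrow> \<not> x < 2^c \<Longrightarrow> y < 2^c \<Longrightarrow> \<not> xor x y < 2^c"
  using top_drop[of x c] by (simp add: lt_pow_iff_drop)

lemma xor_cancel[simp]: "xor (u::nat) (xor u y) = y"
  by (simp add: xor.assoc[symmetric])

lemma xor_0r[simp]: "xor (u::nat) 0 = u" by simp
lemma xor_0l[simp]: "xor 0 (u::nat) = u" by simp

lemma xor_eq0: "xor (x::nat) y = 0 \<longleftrightarrow> x = y"
  by (metis xor_cancel xor_0r xor_self_eq)


lemma pow_lt_Suc: "(x::nat) < 2^c \<Longrightarrow> x < 2^Suc c" by simp

lemma inj_xor: "inj_on (xor (u::nat)) A"
  by (rule inj_onI) (metis xor_cancel)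

lemma sub_fin: "is_subspace c S \<Longrightarrow> finite S"
  unfolding is_subspace_def using finite_subset by blast

lemma sub_zero: "is_subspace c S \<Longrightarrow> 0 \<in> S"
  unfolding is_subspace_def by blast

lemma sub_xor: "is_subspace c S \<Longrightarrow> x \<in> S \<Longrightarrow> y \<in> S \<Longrightarrow> xor x y \<in> S"
  unfolding is_subspace_def by blast

lemma sub_bound: "is_subspace c S \<Longrightarrow> x \<in> S \<Longrightarrow> x < 2^c"
  unfolding is_subspace_def by blast

lemma sub_low: "is_subspace (Suc c) S \<Longrightarrow> is_subspace c (S \<inter> {..<2^c})"
  unfolding is_subspace_def by (auto intro: xor_lt_pow)

lemma sub_Suc: "is_subspace c S \<Longrightarrow> is_subspace (Suc c) S"
  unfolding is_subspace_def using pow_lt_Suc by blast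

lemma sub_Suc_low: "is_subspace (Suc c) S \<Longrightarrow> S \<subseteq> {..<2^c} \<Longrightarrow> is_subspace c S"
  unfolding is_subspace_def by auto

lemma sub_split:
  assumes S: "is_subspace (Suc c) S" and u: "u \<in> S" "\<not> u < 2^c"
  shows "xor u ` (S \<inter> {..<2^c}) = S - {..<2^c}"
proof
  show "xor u ` (S \<inter> {..<2^c}) \<subseteq> S - {..<2^c}"
    using S u xor_tl[of u c] sub_bound[OF S] sub_xor[OF S] by auto
next
  show "S - {..<2^c} \<subseteq> xor u ` (S \<inter> {..<2^c})"
  proof
    fix x assume x: "x \<in> S - {..<2^c}"
    then have "xor u x \<in> S \<inter> {..<2^c}"
      using S u xor_tt[of u c x] sub_bound[OF S] sub_xor[OF S] by auto
    then show "x \<in> xor u ` (S \<inter> {..<2^c})" by (metis image_eqI xor_cancel)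
  qed
qed

lemma card_split:
  assumes S: "is_subspace (Suc c) S" and u: "u \<in> S" "\<not> u < 2^c"
  shows "card S = 2 * card (S \<inter> {..<2^c})"
proof -
  have f: "finite S" using sub_fin[OF S] .
  have "card S = card (S \<inter> {..<2^c}) + card (S - {..<2^c})"
    using f by (metis Int_Diff_Un Int_Diff_disjoint card_Un_disjoint finite_Diff finite_Int)
  also have "card (S - {..<2^c}) = card (S \<inter> {..<2^c})"
    using sub_split[OF assms] card_image[OF inj_xor] by metis
  finally show ?thesis by simp
qed

lemma sub_ext:
  assumes L: "is_subspace c L" and u: "u < 2^Suc c" "\<not> u < 2^c"
  shows "is_subspace (Suc c) (L \<union> xor u ` L)" and "(L \<union> xor u ` L) \<inter> {..<2^c} = L"
proof -
  have Lb: "\<And>x. x \<in> L \<Longrightarrow> x < 2^c" using sub_bound[OF L] .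
  have Lx: "\<And>x y. x \<in> L \<Longrightarrow> y \<in> L \<Longrightarrow> xor x y \<in> L" using sub_xor[OF L] .
  have L0: "0 \<in> L" using sub_zero[OF L] .
  have ub: "\<And>x. x \<in> L \<Longrightarrow> xor u x < 2^Suc c"
  proof -
    fix x assume "x \<in> L"
    then have "x < 2^Suc c" using Lb[of x] pow_lt_Suc by blast
    then show "xor u x < 2^Suc c" using u xor_lt_pow by blast
  qed
  show "(L \<union> xor u ` L) \<inter> {..<2^c} = L"
    using xor_tl[OF u] Lb by auto
  show "is_subspace (Suc c) (L \<union> xor u ` L)"
    unfolding is_subspace_def
  proof (intro conjI ballI)
    show "L \<union> xor u ` L \<subseteq> {..<2 ^ Suc c}"
      using Lb ub pow_lt_Suc by blast
    show "0 \<in> L \<union> xor u ` L" using L0 by simp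
    fix x y assume x: "x \<in> L \<union> xor u ` L" and y: "y \<in> L \<union> xor u ` L"
    show "xor x y \<in> L \<union> xor u ` L"
    proof -
      { fix a b assume "a \<in> L" "b \<in> L"
        have "xor (xor u a) (xor u b) = xor a b"
          by (metis xor.assoc xor.left_commute xor_cancel)
        moreover have "xor a (xor u b) = xor u (xor a b)" by (metis xor.left_commute)
        moreover have "xor (xor u a) b = xor u (xor a b)" by (metis xor.assoc)
        ultimately have "xor (xor u a) (xor u b) \<in> L" "xor a (xor u b) \<in> xor u ` L"
          "xor (xor u a) b \<in> xor u ` L"
          using Lx \<open>a \<in> L\<close> \<open>b \<in> L\<close> by auto }
      then show ?thesis using x y Lx by auto
    qed
  qed
qed

lemma sub_card: "is_subspace c S \<Longrightarrow> \<exists>d\<le>c. card S = 2^d"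
proof (induction c arbitrary: S)
  case 0
  then have "S = {0}" unfolding is_subspace_def by auto
  then show ?case by simp
next
  case (Suc c)
  obtain d where d: "d \<le> c" "card (S \<inter> {..<2^c}) = 2^d"
    using Suc.IH[OF sub_low[OF Suc.prems]] by blast
  show ?case
  proof (cases "S \<subseteq> {..<2^c}")
    case True
    then have "S \<inter> {..<2^c} = S" by blast
    then show ?thesis using d by (metis le_Suc_eq)
  next
    case False
    then obtain u where "u \<in> S" "\<not> u < 2^c" by auto
    then have "card S = 2^Suc d" using card_split[OF Suc.prems] d by simp
    then show ?thesis using d by auto
  qed
qed


definition Ncount :: "nat \<Rightarrow> nat set \<Rightarrow> nat \<Rightarrow> nat" where
  "Ncount c U \<delta> = card {S. is_subspace c S \<and> U \<subseteq> S \<and> card S * 2^\<delta> = 2^c}"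

fun gs :: "nat \<Rightarrow> nat \<Rightarrow> nat" where
  "gs m 0 = 1"
| "gs 0 (Suc d) = 0"
| "gs (Suc m) (Suc d) = gs m d + 2^(Suc d) * gs m (Suc d)"

lemma gs_zero: "m < d \<Longrightarrow> gs m d = 0"
proof (induction m arbitrary: d)
  case 0 then show ?case by (cases d) auto
next
  case (Suc m) then show ?case by (cases d) auto
qed

lemma fin_fam: "finite {S. is_subspace c S \<and> P S}"
  by (rule finite_subset[of _ "Pow {..<2^c}"]) (auto simp: is_subspace_def)

lemma fiber_card:
  assumes S': "is_subspace c S'" and cS: "card S' * 2^\<delta> = 2^c"
  shows "card {S. is_subspace (Suc c) S \<and> S \<inter> {..<2^c} = S' \<and> \<not> S \<subseteq> {..<2^c}} = 2^\<delta>"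
proof -
  define L0 where "L0 = {..<(2::nat)^c}"
  define F where "F = {S. is_subspace (Suc c) S \<and> S \<inter> L0 = S' \<and> \<not> S \<subseteq> L0}"
  define T where "T = {(2::nat)^c..<2^Suc c}"
  define C where "C = (\<lambda>S. S - L0) ` F"
  have finF: "finite F" unfolding F_def using fin_fam by simp
  have pieces: "\<And>S. S \<in> F \<Longrightarrow> \<exists>u\<in>S - L0. S - L0 = xor u ` S'"
  proof -
    fix S assume "S \<in> F"
    then have S: "is_subspace (Suc c) S" "S \<inter> L0 = S'" "\<not> S \<subseteq> L0" unfolding F_def by auto
    then obtain u where "u \<in> S" "\<not> u < 2^c" unfolding L0_def by auto
    then show "\<exists>u\<in>S - L0. S - L0 = xor u ` S'"
      using sub_split[OF S(1), of u] S(2) unfolding L0_def by auto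
  qed
  have cardc: "\<forall>X\<in>C. card X = card S'"
    using pieces card_image[OF inj_xor] unfolding C_def by fastforce
  have UC: "\<Union>C = T"
  proof
    show "\<Union>C \<subseteq> T"
      unfolding C_def F_def T_def L0_def using sub_bound by fastforce
    show "T \<subseteq> \<Union>C"
    proof
      fix v assume v: "v \<in> T"
      then have v': "v < 2^Suc c" "\<not> v < 2^c" unfolding T_def by auto
      define S where "S = S' \<union> xor v ` S'"
      have "is_subspace (Suc c) S" "S \<inter> L0 = S'"
        using sub_ext[OF S' v'] unfolding S_def L0_def by auto
      moreover have "v \<in> S" unfolding S_def using sub_zero[OF S'] by (metis UnI2 image_eqI xor_0r)
      ultimately have "S \<in> F" "v \<in> S - L0" unfolding F_def L0_def using v' by auto
      then show "v \<in> \<Union>C" unfolding C_def by auto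
    qed
  qed
  have disj: "\<forall>X1\<in>C. \<forall>X2\<in>C. X1 \<noteq> X2 \<longrightarrow> X1 \<inter> X2 = {}"
  proof (intro ballI impI)
    fix X1 X2 assume X: "X1 \<in> C" "X2 \<in> C" "X1 \<noteq> X2"
    then obtain S1 S2 where S: "S1 \<in> F" "S2 \<in> F" "X1 = S1 - L0" "X2 = S2 - L0" unfolding C_def by auto
    show "X1 \<inter> X2 = {}"
    proof (rule ccontr)
      assume "X1 \<inter> X2 \<noteq> {}"
      then obtain v where v: "v \<in> S1 - L0" "v \<in> S2 - L0" using S by auto
      have "S1 - L0 = xor v ` S'" using S(1) v(1) sub_split[of c S1 v] unfolding F_def L0_def by auto
      moreover have "S2 - L0 = xor v ` S'" using S(2) v(2) sub_split[of c S2 v] unfolding F_def L0_def by auto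
      ultimately show False using S X by auto
    qed
  qed
  have "card S' * card C = card (\<Union>C)"
  proof (rule card_partition)
    show "finite C" unfolding C_def using finF by simp
    show "finite (\<Union>C)" using UC unfolding T_def by simp
  qed (use cardc disj in auto)
  also have "\<dots> = 2^c" using UC unfolding T_def by simp
  finally have e1: "card S' * card C = 2^c" .
  have "inj_on (\<lambda>S. S - L0) F"
  proof (rule inj_onI)
    fix S1 S2 assume "S1 \<in> F" "S2 \<in> F" "S1 - L0 = S2 - L0"
    moreover have "S1 = (S1 \<inter> L0) \<union> (S1 - L0)" "S2 = (S2 \<inter> L0) \<union> (S2 - L0)" by blast+
    moreover have "S1 \<inter> L0 = S2 \<inter> L0" using \<open>S1 \<in> F\<close> \<open>S2 \<in> F\<close> unfolding F_def by simp
    ultimately show "S1 = S2" by simp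
  qed
  then have "card C = card F" unfolding C_def by (rule card_image)
  then have "card S' * card F = card S' * 2^\<delta>" using e1 cS by simp
  moreover have "card S' > 0" using sub_fin[OF S'] sub_zero[OF S'] by (auto simp: card_gt_0_iff)
  ultimately show ?thesis unfolding F_def L0_def by simp
qed


lemma sub0: "is_subspace 0 S \<Longrightarrow> S = {0}"
  unfolding is_subspace_def by auto

lemma card_sub_le: "is_subspace c S \<Longrightarrow> card S \<le> 2^c"
  unfolding is_subspace_def by (metis card_lessThan card_mono finite_lessThan)

lemma count_thm:
  "is_subspace c U \<Longrightarrow> card U = 2^d \<Longrightarrow> Ncount c U \<delta> = gs (c - d) \<delta>"
proof (induction c arbitrary: U d \<delta>)
  case 0
  then have U: "U = {0}" using sub0 by simp
  then have "(2::nat)^d = 1" using 0 by simp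
  then have d: "d = 0" by (cases d) auto
  have "{S. is_subspace 0 S \<and> U \<subseteq> S \<and> card S * 2^\<delta> = 2^0} = (if \<delta> = 0 then {{0}} else {})"
    using sub0 U by (auto simp: is_subspace_def)
  then show ?case unfolding Ncount_def using d by (cases \<delta>) auto
next
  case (Suc c)
  define L0 where "L0 = {..<(2::nat)^c}"
  show ?case
  proof (cases "U \<subseteq> L0")
    case True
    have Uc: "is_subspace c U" using sub_Suc_low Suc.prems True unfolding L0_def by blast
    have "2^d \<le> (2::nat)^c" using card_sub_le[OF Uc] Suc.prems by simp
    then have dc: "d \<le> c" by simp
    define Fam where "Fam = {S. is_subspace (Suc c) S \<and> U \<subseteq> S \<and> card S * 2^\<delta> = 2^Suc c}"
    define A1 where "A1 = {S \<in> Fam. S \<subseteq> L0}"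
    define A2 where "A2 = {S \<in> Fam. \<not> S \<subseteq> L0}"
    have finA: "finite A1" "finite A2" unfolding A1_def A2_def Fam_def using fin_fam by auto
    have "Fam = A1 \<union> A2" "A1 \<inter> A2 = {}" unfolding A1_def A2_def by auto
    then have cF: "card Fam = card A1 + card A2" using finA card_Un_disjoint by metis
    have cA1: "card A1 = (case \<delta> of 0 \<Rightarrow> 0 | Suc \<delta>' \<Rightarrow> gs (c - d) \<delta>')"
    proof (cases \<delta>)
      case 0
      have "A1 = {}"
      proof (rule ccontr)
        assume "A1 \<noteq> {}"
        then obtain S where S: "is_subspace (Suc c) S" "S \<subseteq> L0" "card S = 2^Suc c"
          unfolding A1_def Fam_def using 0 by auto
        then have "card S \<le> 2^c" unfolding L0_def by (metis card_lessThan card_mono finite_lessThan)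
        then show False using S by simp
      qed
      then show ?thesis using 0 by simp
    next
      case (Suc \<delta>')
      have "A1 = {S. is_subspace c S \<and> U \<subseteq> S \<and> card S * 2^\<delta>' = 2^c}"
      proof (intro set_eqI iffI)
        fix S assume "S \<in> A1"
        then have S: "is_subspace (Suc c) S" "U \<subseteq> S" "card S * 2^\<delta> = 2^Suc c" "S \<subseteq> {..<2^c}"
          unfolding A1_def Fam_def L0_def by auto
        have "card S * 2^\<delta>' = 2^c" using S(3) Suc by simp
        then show "S \<in> {S. is_subspace c S \<and> U \<subseteq> S \<and> card S * 2^\<delta>' = 2^c}"
          using sub_Suc_low[OF S(1) S(4)] S(2) by simp
      next
        fix S assume "S \<in> {S. is_subspace c S \<and> U \<subseteq> S \<and> card S * 2^\<delta>' = 2^c}"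
        then have S: "is_subspace c S" "U \<subseteq> S" "card S * 2^\<delta>' = 2^c" by auto
        have "S \<subseteq> L0" unfolding L0_def using sub_bound[OF S(1)] by auto
        moreover have "card S * 2^\<delta> = 2^Suc c" using S(3) Suc by simp
        ultimately show "S \<in> A1" unfolding A1_def Fam_def using sub_Suc[OF S(1)] S(2) by simp
      qed
      then show ?thesis using Suc Suc.IH[OF Uc Suc.prems(2)] unfolding Ncount_def by simp
    qed
    define B where "B = {S'. is_subspace c S' \<and> U \<subseteq> S' \<and> card S' * 2^\<delta> = 2^c}"
    define F where "F = (\<lambda>S'. {S. is_subspace (Suc c) S \<and> S \<inter> L0 = S' \<and> \<not> S \<subseteq> L0})"
    have A2eq: "A2 = (\<Union>S'\<in>B. F S')"
    proof
      show "A2 \<subseteq> (\<Union>S'\<in>B. F S')"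
      proof
        fix S assume "S \<in> A2"
        then have S: "is_subspace (Suc c) S" "U \<subseteq> S" "card S * 2^\<delta> = 2^Suc c" "\<not> S \<subseteq> L0"
          unfolding A2_def Fam_def by auto
        then obtain u where "u \<in> S" "\<not> u < 2^c" unfolding L0_def by auto
        then have "card S = 2 * card (S \<inter> L0)" using card_split[OF S(1)] unfolding L0_def by simp
        then have "S \<inter> L0 \<in> B" unfolding B_def using S True sub_low[OF S(1)] unfolding L0_def by auto
        then show "S \<in> (\<Union>S'\<in>B. F S')" unfolding F_def using S by auto
      qed
      show "(\<Union>S'\<in>B. F S') \<subseteq> A2"
      proof
        fix S assume "S \<in> (\<Union>S'\<in>B. F S')"
        then obtain S' where S': "S' \<in> B" "is_subspace (Suc c) S" "S \<inter> L0 = S'" "\<not> S \<subseteq> L0"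
          unfolding F_def by auto
        then obtain u where "u \<in> S" "\<not> u < 2^c" unfolding L0_def by auto
        then have "card S = 2 * card S'" using card_split[OF S'(2)] S'(3) unfolding L0_def by simp
        then show "S \<in> A2" using S' unfolding A2_def Fam_def B_def by auto
      qed
    qed
    have "card A2 = (\<Sum>S'\<in>B. card (F S'))"
      unfolding A2eq
    proof (rule card_UN_disjoint)
      show "finite B" unfolding B_def using fin_fam by simp
      show "\<forall>i\<in>B. finite (F i)" unfolding F_def using fin_fam by simp
      show "\<forall>i\<in>B. \<forall>j\<in>B. i \<noteq> j \<longrightarrow> F i \<inter> F j = {}" unfolding F_def by auto
    qed
    also have "\<dots> = (\<Sum>S'\<in>B. 2^\<delta>)"
      by (rule sum.cong) (auto simp: B_def F_def L0_def intro!: fiber_card)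
    also have "\<dots> = 2^\<delta> * Ncount c U \<delta>" unfolding B_def Ncount_def by simp
    also have "\<dots> = 2^\<delta> * gs (c - d) \<delta>" using Suc.IH[OF Uc Suc.prems(2)] by simp
    finally have cA2: "card A2 = 2^\<delta> * gs (c - d) \<delta>" .
    have "Suc c - d = Suc (c - d)" using dc by simp
    then show ?thesis unfolding Ncount_def Fam_def[symmetric] cF cA1 cA2
      by (cases \<delta>) auto
  next
    case False
    then obtain u where u: "u \<in> U" "\<not> u < 2^c" unfolding L0_def by auto
    have Us: "is_subspace (Suc c) U" using Suc.prems by simp
    have ub: "u < 2^Suc c" using sub_bound[OF Us u(1)] .
    have cU: "card U = 2 * card (U \<inter> L0)" using card_split[OF Us u] unfolding L0_def by simp
    have "card (U \<inter> L0) > 0" using sub_zero[OF Us] sub_fin[OF Us] by (auto simp: card_gt_0_iff L0_def)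
    then have "d \<noteq> 0" using cU Suc.prems(2) by (cases d) auto
    then obtain d' where d': "d = Suc d'" by (cases d) auto
    have cU': "card (U \<inter> L0) = 2^d'" using cU Suc.prems(2) d' by simp
    have U's: "is_subspace c (U \<inter> L0)" using sub_low[OF Us] unfolding L0_def .
    define Fam where "Fam = {S. is_subspace (Suc c) S \<and> U \<subseteq> S \<and> card S * 2^\<delta> = 2^Suc c}"
    define B where "B = {S'. is_subspace c S' \<and> U \<inter> L0 \<subseteq> S' \<and> card S' * 2^\<delta> = 2^c}"
    have "bij_betw (\<lambda>S. S \<inter> L0) Fam B"
    proof (rule bij_betw_imageI)
      show "inj_on (\<lambda>S. S \<inter> L0) Fam"
      proof (rule inj_onI)
        fix S1 S2 assume S: "S1 \<in> Fam" "S2 \<in> Fam" "S1 \<inter> L0 = S2 \<inter> L0"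
        have "S1 - L0 = xor u ` (S1 \<inter> L0)" using S(1) u sub_split[of c S1 u] unfolding Fam_def L0_def by auto
        moreover have "S2 - L0 = xor u ` (S2 \<inter> L0)" using S(2) u sub_split[of c S2 u] unfolding Fam_def L0_def by auto
        moreover have "S1 = (S1 \<inter> L0) \<union> (S1 - L0)" "S2 = (S2 \<inter> L0) \<union> (S2 - L0)" by blast+
        ultimately show "S1 = S2" using S(3) by metis
      qed
      show "(\<lambda>S. S \<inter> L0) ` Fam = B"
      proof
        show "(\<lambda>S. S \<inter> L0) ` Fam \<subseteq> B"
        proof
          fix S' assume "S' \<in> (\<lambda>S. S \<inter> L0) ` Fam"
          then obtain S where S: "S \<in> Fam" "S' = S \<inter> L0" by auto
          then have Ss: "is_subspace (Suc c) S" "U \<subseteq> S" "card S * 2^\<delta> = 2^Suc c" unfolding Fam_def by auto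
          have "card S = 2 * card S'" using card_split[OF Ss(1), of u] u Ss(2) S(2) unfolding L0_def by auto
          then show "S' \<in> B" using Ss S(2) sub_low[OF Ss(1)] unfolding B_def L0_def by auto
        qed
        show "B \<subseteq> (\<lambda>S. S \<inter> L0) ` Fam"
        proof
          fix S' assume S': "S' \<in> B"
          then have S's: "is_subspace c S'" "U \<inter> L0 \<subseteq> S'" "card S' * 2^\<delta> = 2^c" unfolding B_def by auto
          define S where "S = S' \<union> xor u ` S'"
          have Ss: "is_subspace (Suc c) S" "S \<inter> L0 = S'"
            using sub_ext[OF S's(1) ub u(2)] unfolding S_def L0_def by auto
          have uS: "u \<in> S" unfolding S_def using sub_zero[OF S's(1)] by (metis UnI2 image_eqI xor_0r)
          have "U \<subseteq> S"
          proof
            fix x assume x: "x \<in> U"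
            show "x \<in> S"
            proof (cases "x < 2^c")
              case True then show ?thesis using x S's(2) unfolding S_def L0_def by auto
            next
              case False
              have "xor u x < 2^c" using xor_tt[OF ub u(2) sub_bound[OF Us x] False] .
              moreover have "xor u x \<in> U" using sub_xor[OF Us u(1) x] .
              ultimately have "xor u x \<in> S'" using S's(2) unfolding L0_def by auto
              then show ?thesis unfolding S_def by (metis UnI2 image_eqI xor_cancel)
            qed
          qed
          moreover have "card S = 2 * card S'" using card_split[OF Ss(1) uS u(2)] Ss(2) unfolding L0_def by simp
          ultimately have "S \<in> Fam" unfolding Fam_def using Ss S's(3) by auto
          then show "S' \<in> (\<lambda>S. S \<inter> L0) ` Fam" using Ss(2) by force
        qed
      qed
    qed
    then have "card Fam = card B" by (rule bij_betw_same_card)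
    also have "\<dots> = gs (c - d') \<delta>" using Suc.IH[OF U's cU'] unfolding Ncount_def B_def by simp
    finally show ?thesis unfolding Ncount_def Fam_def[symmetric] using d' by simp
  qed
qed


lemma Kc_1: "Kc 1 = 1" "Kc (Suc 0) = 1" by (simp_all add: Kc_def)

lemma Kc_Suc: "1 \<le> d \<Longrightarrow> Kc (Suc d) = Kc d * (1 - 2^d)"
  unfolding Kc_def by (simp add: prod.atLeastLessThan_Suc)

lemma gs_identity: "(\<Sum>\<delta>=1..m. Kc \<delta> * real (gs m \<delta>)) = real m"
proof (induction m)
  case 0 then show ?case by simp
next
  case (Suc m)
  have "(\<Sum>\<delta>=1..Suc m. Kc \<delta> * real (gs (Suc m) \<delta>))
      = (\<Sum>e=0..m. Kc (Suc e) * real (gs (Suc m) (Suc e)))"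
    using sum.shift_bounds_cl_Suc_ivl[of "\<lambda>\<delta>. Kc \<delta> * real (gs (Suc m) \<delta>)" 0 m] by simp
  also have "\<dots> = (\<Sum>e=0..m. Kc (Suc e) * real (gs m e))
        + (\<Sum>e=0..m. Kc (Suc e) * 2^(Suc e) * real (gs m (Suc e)))"
    by (simp add: sum.distrib algebra_simps)
  also have "(\<Sum>e=0..m. Kc (Suc e) * 2^(Suc e) * real (gs m (Suc e)))
      = (\<Sum>e=1..Suc m. Kc e * 2^e * real (gs m e))"
    using sum.shift_bounds_cl_Suc_ivl[of "\<lambda>e. Kc e * 2^e * real (gs m e)" 0 m] by simp
  also have "\<dots> = (\<Sum>e=1..m. Kc e * 2^e * real (gs m e))"
    by (simp add: gs_zero)
  also have "(\<Sum>e=0..m. Kc (Suc e) * real (gs m e)) = 1 + (\<Sum>e=1..m. Kc (Suc e) * real (gs m e))"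
    by (simp add: sum.atLeast_Suc_atMost Kc_1)
  also have "(\<Sum>e=1..m. Kc (Suc e) * real (gs m e)) = (\<Sum>e=1..m. Kc e * (1 - 2^e) * real (gs m e))"
    by (rule sum.cong) (auto simp: Kc_Suc)
  finally have "(\<Sum>\<delta>=1..Suc m. Kc \<delta> * real (gs (Suc m) \<delta>))
      = 1 + (\<Sum>e=1..m. Kc e * (1 - 2^e) * real (gs m e) + Kc e * 2^e * real (gs m e))"
    by (simp add: sum.distrib)
  also have "\<dots> = 1 + (\<Sum>e=1..m. Kc e * real (gs m e))"
    by (simp add: algebra_simps)
  finally show ?case using Suc.IH by simp
qed

lemma gs_identity': "m \<le> k \<Longrightarrow> (\<Sum>\<delta>=1..k. Kc \<delta> * real (gs m \<delta>)) = real m"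
proof -
  assume "m \<le> k"
  then have "(\<Sum>\<delta>=1..k. Kc \<delta> * real (gs m \<delta>)) = (\<Sum>\<delta>=1..m. Kc \<delta> * real (gs m \<delta>))"
    by (intro sum.mono_neutral_right) (auto simp: gs_zero)
  then show ?thesis using gs_identity by simp
qed


definition spn :: "nat \<Rightarrow> nat set \<Rightarrow> nat set" where
  "spn k Z = \<Inter>{S. is_subspace k S \<and> Z \<subseteq> S}"

lemma sub_full: "is_subspace k {..<2^k}"
  unfolding is_subspace_def by (auto intro: xor_lt_pow)

lemma spn_sub: "Z \<subseteq> {..<2^k} \<Longrightarrow> is_subspace k (spn k Z)"
  unfolding is_subspace_def spn_def
  using sub_full[of k] unfolding is_subspace_def by blast

lemma spn_least: "is_subspace k S \<Longrightarrow> Z \<subseteq> S \<Longrightarrow> spn k Z \<subseteq> S"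
  unfolding spn_def by blast

lemma spn_ge: "Z \<subseteq> spn k Z"
  unfolding spn_def by blast

lemma spn_iff: "is_subspace k S \<Longrightarrow> (Z \<subseteq> S \<longleftrightarrow> spn k Z \<subseteq> S)"
  using spn_least spn_ge by blast

lemma spn_eqI: "is_subspace k T \<Longrightarrow> Z \<subseteq> T \<Longrightarrow> (\<And>S. is_subspace k S \<Longrightarrow> Z \<subseteq> S \<Longrightarrow> T \<subseteq> S) \<Longrightarrow> spn k Z = T"
  unfolding spn_def by blast

definition cnt :: "nat \<Rightarrow> nat set \<Rightarrow> nat \<Rightarrow> nat" where
  "cnt k Z \<delta> = card {S \<in> Xi k (k - \<delta>). Z \<subseteq> S}"

lemma cnt_eq: assumes "Z \<subseteq> {..<2^k}" "\<delta> \<le> k" "card (spn k Z) = 2^d"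
  shows "cnt k Z \<delta> = gs (k - d) \<delta>"
proof -
  have "{S \<in> Xi k (k - \<delta>). Z \<subseteq> S} = {S. is_subspace k S \<and> spn k Z \<subseteq> S \<and> card S * 2^\<delta> = 2^k}"
  proof -
    have "\<And>x::nat. (x = 2^(k-\<delta>)) = (x * 2^\<delta> = 2^k)"
      using assms(2) by (metis add_diff_inverse_nat diff_diff_cancel diff_le_self nonzero_mult_div_cancel_right
          not_less power_add power_not_zero zero_neq_numeral)
    then show ?thesis unfolding Xi_def using spn_iff by blast
  qed
  then show ?thesis unfolding cnt_def using count_thm[OF spn_sub[OF assms(1)] assms(3)]
    unfolding Ncount_def by simp
qed

definition psi :: "nat \<Rightarrow> nat set \<Rightarrow> real" where
  "psi k Z = (\<Sum>\<delta>=1..k. Kc \<delta> * real (cnt k Z \<delta>))"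

lemma psi_val: assumes "Z \<subseteq> {..<2^k}" "card (spn k Z) = 2^d"
  shows "psi k Z = real k - real d"
proof -
  have "2^d \<le> (2::nat)^k" using card_sub_le[OF spn_sub[OF assms(1)]] assms(2) by simp
  then have dk: "d \<le> k" by simp
  have "psi k Z = (\<Sum>\<delta>=1..k. Kc \<delta> * real (gs (k - d) \<delta>))"
    unfolding psi_def by (rule sum.cong) (auto simp: cnt_eq[OF assms(1) _ assms(2)])
  also have "\<dots> = real (k - d)" by (rule gs_identity') simp
  finally show ?thesis using dk by simp
qed

lemma psi_mono: assumes "Z \<subseteq> Z'" "Z' \<subseteq> {..<2^k}"
  shows "psi k Z' \<le> psi k Z"
proof -
  have Zk: "Z \<subseteq> {..<2^k}" using assms by blast
  obtain d where d: "card (spn k Z) = 2^d" using sub_card[OF spn_sub[OF Zk]] by blast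
  obtain d' where d': "card (spn k Z') = 2^d'" using sub_card[OF spn_sub[OF assms(2)]] by blast
  have "spn k Z \<subseteq> spn k Z'" using spn_least[OF spn_sub[OF assms(2)]] spn_ge assms(1) by blast
  then have "card (spn k Z) \<le> card (spn k Z')" using sub_fin[OF spn_sub[OF assms(2)]] card_mono by blast
  then have "d \<le> d'" using d d' by simp
  then show ?thesis using psi_val[OF Zk d] psi_val[OF assms(2) d'] by simp
qed

lemma spn_empty: "spn k {} = {0}"
  by (rule spn_eqI) (auto simp: is_subspace_def sub_zero)

lemma spn_single: "i < 2^k \<Longrightarrow> spn k {i} = {0, i}"
  by (rule spn_eqI) (auto simp: is_subspace_def sub_zero)

lemma spn_pair: assumes "i < 2^k" "j < 2^k"
  shows "spn k {i, j} = {0, i, j, xor i j}"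
proof (rule spn_eqI)
  show "is_subspace k {0, i, j, xor i j}"
  proof -
    have f: "xor i (xor i j) = j" "xor j (xor i j) = i" "xor (xor i j) i = j" "xor (xor i j) j = i"
      "xor j i = xor i j"
      by (metis xor_cancel, metis xor_cancel xor.commute, metis xor_cancel xor.commute,
          metis xor_cancel xor.commute, metis xor.commute)
    show ?thesis unfolding is_subspace_def using assms
      by (auto simp: xor_lt_pow f simp del: xor_cancel)
  qed
qed (auto simp: sub_zero sub_xor)

lemma psi_empty: "psi k {} = real k"
  using psi_val[of "{}" k 0] spn_empty by simp

lemma psi_single: "0 < i \<Longrightarrow> i < 2^k \<Longrightarrow> psi k {i} = real k - 1"
  using psi_val[of "{i}" k 1] spn_single by simp

lemma psi_pair: assumes "0 < i" "0 < j" "i \<noteq> j" "i < 2^k" "j < 2^k"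
  shows "psi k {i, j} = real k - 2"
proof -
  have a: "xor i j = i \<Longrightarrow> j = 0" by (metis xor_cancel xor_self_eq)
  have b: "xor i j = j \<Longrightarrow> i = 0" by (metis xor_cancel xor_self_eq xor.commute)
  have "xor i j \<noteq> 0" "xor i j \<noteq> i" "xor i j \<noteq> j" using assms xor_eq0 a b by auto
  then have "card {0, i, j, xor i j} = 2^2" using assms by auto
  then show ?thesis using psi_val[of "{i,j}" k 2] spn_pair assms by simp
qed


lemma fin_Xi: "finite (Xi k d)"
  by (rule finite_subset[of _ "Pow {..<2^k}"]) (auto simp: Xi_def is_subspace_def)

lemma Xi_sub: "S \<in> Xi k d \<Longrightarrow> is_subspace k S"
  by (simp add: Xi_def)

lemma binom_sets: "finite T \<Longrightarrow> (\<Sum>A\<in>Pow T. (1 - x) ^ card A * x ^ (card T - card A)) = (1::real)"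
proof -
  assume T: "finite T"
  have "(\<Prod>t\<in>T. (1 - x) + x) = (\<Sum>A\<in>Pow T. (\<Prod>t\<in>A. 1 - x) * (\<Prod>t\<in>T - A. x))"
    by (rule prod_add[OF T])
  also have "\<dots> = (\<Sum>A\<in>Pow T. (1 - x) ^ card A * x ^ (card T - card A))"
    by (rule sum.cong) (auto simp: card_Diff_subset finite_subset[OF _ T])
  finally show ?thesis by simp
qed

lemma expand_pow:
  assumes R: "finite R"
  shows "(x::real) ^ card (R - S) = (\<Sum>A\<in>Pow (R \<inter> S). (1 - x) ^ card A * x ^ (card R - card A))"
proof -
  have cR: "card R = card (R \<inter> S) + card (R - S)"
    using R by (metis Int_Diff_Un Int_Diff_disjoint card_Un_disjoint finite_Diff finite_Int)
  have "x ^ card (R - S) = x ^ card (R - S) * (\<Sum>A\<in>Pow (R \<inter> S). (1 - x) ^ card A * x ^ (card (R \<inter> S) - card A))"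
    using binom_sets[of "R \<inter> S" x] R by simp
  also have "\<dots> = (\<Sum>A\<in>Pow (R \<inter> S). (1 - x) ^ card A * x ^ (card R - card A))"
    unfolding sum_distrib_left
  proof (rule sum.cong)
    fix A assume "A \<in> Pow (R \<inter> S)"
    then have "card A \<le> card (R \<inter> S)" using R by (simp add: card_mono)
    then have "card R - card A = (card (R \<inter> S) - card A) + card (R - S)" using cR by simp
    then show "x ^ card (R - S) * ((1 - x) ^ card A * x ^ (card (R \<inter> S) - card A)) =
         (1 - x) ^ card A * x ^ (card R - card A)" by (simp add: power_add)
  qed simp
  finally show ?thesis .
qed

lemma cnt_split:
  "real (card {S \<in> Xi k d. Z \<subseteq> S \<and> i \<notin> S}) = real (card {S \<in> Xi k d. Z \<subseteq> S}) - real (card {S \<in> Xi k d. insert i Z \<subseteq> S})"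
proof -
  have "{S \<in> Xi k d. Z \<subseteq> S} = {S \<in> Xi k d. Z \<subseteq> S \<and> i \<notin> S} \<union> {S \<in> Xi k d. insert i Z \<subseteq> S}"
       "{S \<in> Xi k d. Z \<subseteq> S \<and> i \<notin> S} \<inter> {S \<in> Xi k d. insert i Z \<subseteq> S} = {}" by auto
  then have "card {S \<in> Xi k d. Z \<subseteq> S} = card {S \<in> Xi k d. Z \<subseteq> S \<and> i \<notin> S} + card {S \<in> Xi k d. insert i Z \<subseteq> S}"
    using fin_Xi[of k d] by (metis (no_types, lifting) card_Un_disjoint finite_Un mem_Collect_eq finite_subset subsetI)
  then show ?thesis by simp
qed

lemma D_pos:
  fixes x :: real
  assumes x: "0 < x" "x < 1" and Y: "Y \<subseteq> {1..<2^k}" and i: "i \<in> {1..<2^k}" "i \<notin> Y"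
    and gap: "psi k (insert i Y) < psi k Y"
  shows "0 < (\<Sum>\<delta>=1..k. Kc \<delta> * (\<Sum>S\<in>{S \<in> Xi k (k - \<delta>). Y \<subseteq> S \<and> i \<notin> S}. x ^ card ({1..<2^k} - S)))"
proof -
  define V where "V = {1::nat..<2^k}"
  define R where "R = V - Y - {i}"
  define t where "t = (\<lambda>A::nat set. (1 - x) ^ card A * x ^ (card R - card A))"
  have finR: "finite R" unfolding R_def V_def by simp
  have key: "\<And>\<delta>. (\<Sum>S\<in>{S \<in> Xi k (k - \<delta>). Y \<subseteq> S \<and> i \<notin> S}. x ^ card (V - S))
      = x * (\<Sum>A\<in>Pow R. t A * (real (cnt k (Y \<union> A) \<delta>) - real (cnt k (insert i (Y \<union> A)) \<delta>)))"
  proof -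
    fix \<delta>
    define P where "P = {S \<in> Xi k (k - \<delta>). Y \<subseteq> S \<and> i \<notin> S}"
    have finP: "finite P" unfolding P_def using fin_Xi by simp
    have "(\<Sum>S\<in>P. x ^ card (V - S)) = (\<Sum>S\<in>P. x * (\<Sum>A\<in>{A \<in> Pow R. A \<subseteq> S}. t A))"
    proof (rule sum.cong)
      fix S assume "S \<in> P"
      then have S: "Y \<subseteq> S" "i \<notin> S" unfolding P_def by auto
      have "V - S = insert i (R - S)" "i \<notin> R - S" using S i unfolding R_def V_def by auto
      then have "card (V - S) = Suc (card (R - S))" using finR by simp
      moreover have "Pow (R \<inter> S) = {A \<in> Pow R. A \<subseteq> S}" by auto
      ultimately show "x ^ card (V - S) = x * (\<Sum>A\<in>{A \<in> Pow R. A \<subseteq> S}. t A)"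
        using expand_pow[OF finR, of x S] unfolding t_def by simp
    qed simp
    also have "\<dots> = x * (\<Sum>S\<in>P. \<Sum>A\<in>{A \<in> Pow R. A \<subseteq> S}. t A)" by (simp add: sum_distrib_left)
    also have "(\<Sum>S\<in>P. \<Sum>A\<in>{A \<in> Pow R. A \<subseteq> S}. t A) = (\<Sum>A\<in>Pow R. \<Sum>S\<in>{S \<in> P. A \<subseteq> S}. t A)"
      by (rule sum.swap_restrict) (use finP finR in auto)
    also have "\<dots> = (\<Sum>A\<in>Pow R. t A * real (card {S \<in> P. A \<subseteq> S}))" by (simp add: mult.commute)
    also have "\<dots> = (\<Sum>A\<in>Pow R. t A * (real (cnt k (Y \<union> A) \<delta>) - real (cnt k (insert i (Y \<union> A)) \<delta>)))"
    proof (rule sum.cong)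
      fix A assume "A \<in> Pow R"
      have "{S \<in> P. A \<subseteq> S} = {S \<in> Xi k (k - \<delta>). Y \<union> A \<subseteq> S \<and> i \<notin> S}" unfolding P_def by auto
      then show "t A * real (card {S \<in> P. A \<subseteq> S}) = t A * (real (cnt k (Y \<union> A) \<delta>) - real (cnt k (insert i (Y \<union> A)) \<delta>))"
        unfolding cnt_def by (simp only: cnt_split)
    qed simp
    finally show "(\<Sum>S\<in>{S \<in> Xi k (k - \<delta>). Y \<subseteq> S \<and> i \<notin> S}. x ^ card (V - S))
      = x * (\<Sum>A\<in>Pow R. t A * (real (cnt k (Y \<union> A) \<delta>) - real (cnt k (insert i (Y \<union> A)) \<delta>)))"
      unfolding P_def .
  qed
  have "(\<Sum>\<delta>=1..k. Kc \<delta> * (\<Sum>S\<in>{S \<in> Xi k (k - \<delta>). Y \<subseteq> S \<and> i \<notin> S}. x ^ card (V - S)))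
      = (\<Sum>\<delta>=1..k. \<Sum>A\<in>Pow R. x * (t A * (Kc \<delta> * real (cnt k (Y \<union> A) \<delta>) - Kc \<delta> * real (cnt k (insert i (Y \<union> A)) \<delta>))))"
    unfolding key by (simp add: sum_distrib_left algebra_simps)
  also have "\<dots> = (\<Sum>A\<in>Pow R. \<Sum>\<delta>=1..k. x * (t A * (Kc \<delta> * real (cnt k (Y \<union> A) \<delta>) - Kc \<delta> * real (cnt k (insert i (Y \<union> A)) \<delta>))))"
    by (rule sum.swap)
  also have "\<dots> = (\<Sum>A\<in>Pow R. x * t A * (psi k (Y \<union> A) - psi k (insert i (Y \<union> A))))"
    unfolding psi_def by (simp add: sum_distrib_left sum_subtractf algebra_simps)
  finally have eq: "(\<Sum>\<delta>=1..k. Kc \<delta> * (\<Sum>S\<in>{S \<in> Xi k (k - \<delta>). Y \<subseteq> S \<and> i \<notin> S}. x ^ card (V - S)))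
     = (\<Sum>A\<in>Pow R. x * t A * (psi k (Y \<union> A) - psi k (insert i (Y \<union> A))))" .
  have tpos: "\<And>A. 0 < t A" unfolding t_def using x by simp
  have nonneg: "\<And>A. A \<in> Pow R \<Longrightarrow> 0 \<le> x * t A * (psi k (Y \<union> A) - psi k (insert i (Y \<union> A)))"
  proof -
    fix A assume "A \<in> Pow R"
    then have "insert i (Y \<union> A) \<subseteq> {..<2^k}" using Y i unfolding R_def V_def by auto
    then have "psi k (insert i (Y \<union> A)) \<le> psi k (Y \<union> A)" by (rule psi_mono[rotated]) auto
    then show "0 \<le> x * t A * (psi k (Y \<union> A) - psi k (insert i (Y \<union> A)))"
      using tpos[of A] x by simp
  qed
  have "0 < x * t {} * (psi k (Y \<union> {}) - psi k (insert i (Y \<union> {})))"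
    using tpos[of "{}"] x gap by simp
  also have "\<dots> \<le> (\<Sum>A\<in>Pow R. x * t A * (psi k (Y \<union> A) - psi k (insert i (Y \<union> A))))"
    by (rule member_le_sum) (use nonneg finR in auto)
  finally show ?thesis using eq unfolding V_def by simp
qed


lemma card_VS: assumes "S \<in> Xi k (k - \<delta>)" "\<delta> \<le> k"
  shows "card ({1..<2^k} - S) = 2^k - 2^(k - \<delta>)"
proof -
  have S: "is_subspace k S" "card S = 2^(k-\<delta>)" using assms unfolding Xi_def by auto
  have "{1..<2^k} - S = {..<2^k} - S" using sub_zero[OF S(1)] by (auto simp: Suc_le_eq) (metis neq0_conv)
  moreover have "S \<subseteq> {..<2^k}" using S(1) unfolding is_subspace_def by auto
  ultimately show ?thesis using S(2) by (simp add: card_Diff_subset sub_fin[OF S(1)])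
qed

lemma sum_const_Xi: assumes "\<delta> \<le> k"
  shows "(\<Sum>S\<in>{S \<in> Xi k (k - \<delta>). P S}. (x::real) ^ card ({1..<2^k} - S))
       = real (card {S \<in> Xi k (k - \<delta>). P S}) * x ^ (2^k - 2^(k - \<delta>))"
proof -
  have "(\<Sum>S\<in>{S \<in> Xi k (k - \<delta>). P S}. x ^ card ({1..<2^k} - S))
      = (\<Sum>S\<in>{S \<in> Xi k (k - \<delta>). P S}. x ^ (2^k - 2^(k - \<delta>)))"
    by (rule sum.cong) (use card_VS assms in auto)
  then show ?thesis by simp
qed

definition cc1 :: "nat \<Rightarrow> real \<Rightarrow> nat \<Rightarrow> real" where
  "cc1 k x i = (\<Sum>\<delta>=1..k. Kc \<delta> * (\<Sum>S\<in>{S \<in> Xi k (k - \<delta>). i \<notin> S}. x ^ card ({1..<2^k} - S)))"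

definition cc2 :: "nat \<Rightarrow> real \<Rightarrow> nat \<Rightarrow> nat \<Rightarrow> real" where
  "cc2 k x i j = (\<Sum>\<delta>=1..k. Kc \<delta> * (\<Sum>S\<in>{S \<in> Xi k (k - \<delta>). i \<notin> S \<and> j \<notin> S}. x ^ card ({1..<2^k} - S)))"

definition C1 :: "nat \<Rightarrow> real \<Rightarrow> real" where
  "C1 k x = (\<Sum>\<delta>=1..k. Kc \<delta> * (real (gs k \<delta>) - real (gs (k-1) \<delta>)) * x ^ (2^k - 2^(k - \<delta>)))"

definition C2 :: "nat \<Rightarrow> real \<Rightarrow> real" where
  "C2 k x = (\<Sum>\<delta>=1..k. Kc \<delta> * ((real (gs k \<delta>) - real (gs (k-1) \<delta>)) - (real (gs (k-1) \<delta>) - real (gs (k-2) \<delta>))) * x ^ (2^k - 2^(k - \<delta>)))"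

lemma cnt_empty: "\<delta> \<le> k \<Longrightarrow> cnt k {} \<delta> = gs k \<delta>"
  using cnt_eq[of "{}" k \<delta> 0] spn_empty by simp

lemma cnt_single: "0 < i \<Longrightarrow> i < 2^k \<Longrightarrow> \<delta> \<le> k \<Longrightarrow> cnt k {i} \<delta> = gs (k-1) \<delta>"
  using cnt_eq[of "{i}" k \<delta> 1] spn_single by simp

lemma cnt_pair: assumes "0 < i" "0 < j" "i \<noteq> j" "i < 2^k" "j < 2^k" "\<delta> \<le> k"
  shows "cnt k {i,j} \<delta> = gs (k-2) \<delta>"
proof -
  have a: "xor i j = i \<Longrightarrow> j = 0" by (metis xor_cancel xor_self_eq)
  have b: "xor i j = j \<Longrightarrow> i = 0" by (metis xor_cancel xor_self_eq xor.commute)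
  have "xor i j \<noteq> 0" "xor i j \<noteq> i" "xor i j \<noteq> j" using assms xor_eq0 a b by auto
  then have "card {0, i, j, xor i j} = 2^2" using assms by auto
  then show ?thesis using cnt_eq[of "{i,j}" k \<delta> 2] spn_pair assms by simp
qed

lemma cc1_eq: assumes "i \<in> {1..<2^k}" shows "cc1 k x i = C1 k x"
  unfolding cc1_def C1_def
proof (rule sum.cong)
  fix \<delta> assume d: "\<delta> \<in> {1..k}"
  have "card {S \<in> Xi k (k - \<delta>). i \<notin> S} = card {S \<in> Xi k (k - \<delta>). {} \<subseteq> S \<and> i \<notin> S}" by simp
  then have "real (card {S \<in> Xi k (k - \<delta>). i \<notin> S}) = real (gs k \<delta>) - real (gs (k-1) \<delta>)"
    using cnt_split[of k "k-\<delta>" "{}" i] cnt_empty[of \<delta> k] cnt_single[of i k \<delta>] assms d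
    unfolding cnt_def by simp
  then show "Kc \<delta> * (\<Sum>S\<in>{S \<in> Xi k (k - \<delta>). i \<notin> S}. x ^ card ({1..<2^k} - S)) =
         Kc \<delta> * (real (gs k \<delta>) - real (gs (k - 1) \<delta>)) * x ^ (2 ^ k - 2 ^ (k - \<delta>))"
    using sum_const_Xi[where \<delta>=\<delta> and k=k and P="\<lambda>S. i \<notin> S" and x=x] d by simp
qed simp

lemma cc_diff: "cc1 k x i - cc2 k x i j = (\<Sum>\<delta>=1..k. Kc \<delta> * (\<Sum>S\<in>{S \<in> Xi k (k - \<delta>). {j} \<subseteq> S \<and> i \<notin> S}. x ^ card ({1..<2^k} - S)))"
  unfolding cc1_def cc2_def sum_subtractf[symmetric] right_diff_distrib[symmetric]
proof (rule sum.cong)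
  fix \<delta>
  have "{S \<in> Xi k (k - \<delta>). i \<notin> S} = {S \<in> Xi k (k - \<delta>). i \<notin> S \<and> j \<notin> S} \<union> {S \<in> Xi k (k - \<delta>). {j} \<subseteq> S \<and> i \<notin> S}"
    "{S \<in> Xi k (k - \<delta>). i \<notin> S \<and> j \<notin> S} \<inter> {S \<in> Xi k (k - \<delta>). {j} \<subseteq> S \<and> i \<notin> S} = {}" by auto
  then show "Kc \<delta> * ((\<Sum>S\<in>{S \<in> Xi k (k - \<delta>). i \<notin> S}. x ^ card ({1..<2^k} - S)) -
          (\<Sum>S\<in>{S \<in> Xi k (k - \<delta>). i \<notin> S \<and> j \<notin> S}. x ^ card ({1..<2^k} - S))) =
         Kc \<delta> * (\<Sum>S\<in>{S \<in> Xi k (k - \<delta>). {j} \<subseteq> S \<and> i \<notin> S}. x ^ card ({1..<2^k} - S))"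
    using fin_Xi[of k "k-\<delta>"] by (simp add: sum.union_disjoint)
qed simp

lemma cc2_eq: assumes "i \<in> {1..<2^k}" "j \<in> {1..<2^k}" "i \<noteq> j" shows "cc2 k x i j = C2 k x"
proof -
  have e1: "C1 k x - C2 k x = (\<Sum>\<delta>=1..k. Kc \<delta> * (real (gs (k-1) \<delta>) - real (gs (k-2) \<delta>)) * x ^ (2^k - 2^(k - \<delta>)))"
    unfolding C1_def C2_def sum_subtractf[symmetric] by (rule sum.cong) (auto simp: algebra_simps)
  have "cc1 k x i - cc2 k x i j = (\<Sum>\<delta>=1..k. Kc \<delta> * (real (gs (k-1) \<delta>) - real (gs (k-2) \<delta>)) * x ^ (2^k - 2^(k - \<delta>)))"
    unfolding cc_diff
  proof (rule sum.cong)
    fix \<delta> assume d: "\<delta> \<in> {1..k}"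
    have "real (card {S \<in> Xi k (k - \<delta>). {j} \<subseteq> S \<and> i \<notin> S}) = real (gs (k-1) \<delta>) - real (gs (k-2) \<delta>)"
      using cnt_split[of k "k-\<delta>" "{j}" i] cnt_single[of j k \<delta>] cnt_pair[of i j k \<delta>] assms d
      unfolding cnt_def by (simp add: insert_commute)
    then show "Kc \<delta> * (\<Sum>S\<in>{S \<in> Xi k (k - \<delta>). {j} \<subseteq> S \<and> i \<notin> S}. x ^ card ({1..<2 ^ k} - S)) =
      Kc \<delta> * (real (gs (k-1) \<delta>) - real (gs (k-2) \<delta>)) * x ^ (2^k - 2^(k - \<delta>))"
      using sum_const_Xi[where \<delta>=\<delta> and k=k and P="\<lambda>S. {j} \<subseteq> S \<and> i \<notin> S" and x=x] d by simp
  qed simp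
  then show ?thesis using cc1_eq[OF assms(1)] e1 by simp
qed

lemma C1_pos: assumes "1 \<le> k" "0 < x" "x < 1" shows "0 < C1 k x"
proof -
  have "(2::nat) \<le> 2^k" using power_increasing[of 1 k "2::nat"] assms by simp
  then have i: "(1::nat) \<in> {1..<2^k}" by simp
  have "0 < (\<Sum>\<delta>=1..k. Kc \<delta> * (\<Sum>S\<in>{S \<in> Xi k (k - \<delta>). {} \<subseteq> S \<and> 1 \<notin> S}. x ^ card ({1..<2^k} - S)))"
    by (rule D_pos) (use assms i psi_single[of 1 k] psi_empty[of k] in auto)
  then show ?thesis using cc1_eq[OF i, of x] unfolding cc1_def by simp
qed

lemma C12_pos: assumes "2 \<le> k" "0 < x" "x < 1" shows "C2 k x < C1 k x"
proof -
  have "(4::nat) \<le> 2^k" using power_increasing[OF assms(1), of "2::nat"] by simp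
  then have i: "(1::nat) \<in> {1..<2^k}" "(2::nat) \<in> {1..<2^k}" by auto
  have "0 < (\<Sum>\<delta>=1..k. Kc \<delta> * (\<Sum>S\<in>{S \<in> Xi k (k - \<delta>). {2} \<subseteq> S \<and> 1 \<notin> S}. x ^ card ({1..<2^k} - S)))"
    by (rule D_pos) (use assms i psi_single[of 2 k] psi_pair[of 1 2 k] in \<open>auto simp: insert_commute\<close>)
  then show ?thesis using cc_diff[of k x 1 2] cc1_eq[OF i(1), of x] cc2_eq[OF i, of x] by simp
qed


lemma sq_sum_le: "finite T \<Longrightarrow> (\<Sum>i\<in>T. a i)^2 \<le> real (card T) * (\<Sum>i\<in>T. (a i)^2)"
proof -
  assume T: "finite T"
  have "(\<Sum>i\<in>T. a i)^2 = (\<Sum>i\<in>T. \<Sum>j\<in>T. a i * a j)"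
    by (simp add: power2_eq_square sum_product)
  also have "\<dots> \<le> (\<Sum>i\<in>T. \<Sum>j\<in>T. ((a i)^2 + (a j)^2) / 2)"
  proof (intro sum_mono)
    fix i j
    have "0 \<le> (a i - a j)^2" by simp
    then show "a i * a j \<le> ((a i)^2 + (a j)^2) / 2" by (simp add: power2_eq_square algebra_simps)
  qed
  also have "\<dots> = real (card T) * (\<Sum>i\<in>T. (a i)^2)"
    by (simp add: sum.distrib add_divide_distrib sum_divide_distrib[symmetric] sum_distrib_left[symmetric]
        sum.swap[of "\<lambda>i j. (a j)^2"] mult.commute)
  finally show ?thesis .
qed

definition e2 :: "(nat \<Rightarrow> real) \<Rightarrow> nat set \<Rightarrow> real" where
  "e2 u T = ((\<Sum>i\<in>T. u i)^2 - (\<Sum>i\<in>T. (u i)^2)) / 2"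

definition rem :: "(nat \<Rightarrow> real) \<Rightarrow> nat set \<Rightarrow> real" where
  "rem u T = (\<Prod>i\<in>T. 1 + u i) - 1 - (\<Sum>i\<in>T. u i) - e2 u T"

lemma e2_bound: "finite T \<Longrightarrow> \<bar>e2 u T\<bar> \<le> real (card T) * (\<Sum>i\<in>T. (u i)^2)"
proof -
  assume T: "finite T"
  have q: "0 \<le> (\<Sum>i\<in>T. (u i)^2)" by (simp add: sum_nonneg)
  have a: "(\<Sum>i\<in>T. u i)^2 \<le> real (card T) * (\<Sum>i\<in>T. (u i)^2)" by (rule sq_sum_le[OF T])
  show ?thesis
  proof (cases "T = {}")
    case True then show ?thesis by (simp add: e2_def)
  next
    case False
    then have "1 \<le> real (card T)" using T by (simp add: Suc_le_eq card_gt_0_iff)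
    then have b: "(\<Sum>i\<in>T. (u i)^2) \<le> real (card T) * (\<Sum>i\<in>T. (u i)^2)" using q
      by (metis mult_le_cancel_right1 not_le order_less_le)
    have p: "0 \<le> (\<Sum>i\<in>T. u i)^2" by simp
    have "\<bar>(\<Sum>i\<in>T. u i)^2 - (\<Sum>i\<in>T. (u i)^2)\<bar> \<le> real (card T) * (\<Sum>i\<in>T. (u i)^2)"
      unfolding abs_le_iff using a q b p by linarith
    moreover have "real (card T) * (\<Sum>i\<in>T. (u i)^2) \<le> 2 * (real (card T) * (\<Sum>i\<in>T. (u i)^2))"
      using q by simp
    ultimately show ?thesis unfolding e2_def by (simp add: abs_divide)
  qed
qed

lemma e2_insert: "finite T \<Longrightarrow> t \<notin> T \<Longrightarrow> e2 u (insert t T) = e2 u T + u t * (\<Sum>i\<in>T. u i)"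
  unfolding e2_def by (simp add: power2_eq_square field_simps)

lemma rem_insert: "finite T \<Longrightarrow> t \<notin> T \<Longrightarrow> rem u (insert t T) = rem u T + u t * (e2 u T + rem u T)"
  unfolding rem_def by (simp add: e2_insert algebra_simps)

lemma rem_bound:
  assumes "finite T" "\<forall>i\<in>T. \<bar>u i\<bar> \<le> m" "0 \<le> m" "m \<le> 1"
  shows "\<bar>rem u T\<bar> \<le> m * real (card T) * (\<Sum>i\<in>T. (u i)^2) * (2 ^ card T - 1)"
  using assms
proof (induction T rule: finite_induct)
  case empty then show ?case by (simp add: rem_def e2_def)
next
  case (insert t T)
  define Q where "Q = (\<Sum>i\<in>T. (u i)^2)"
  define Q' where "Q' = (\<Sum>i\<in>insert t T. (u i)^2)"
  have QQ: "Q \<le> Q'" "0 \<le> Q" unfolding Q_def Q'_def using insert by (auto simp: sum_nonneg)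
  have ut: "\<bar>u t\<bar> \<le> m" using insert by simp
  have IH: "\<bar>rem u T\<bar> \<le> m * real (card T) * Q * (2 ^ card T - 1)" using insert unfolding Q_def by simp
  have E: "\<bar>e2 u T\<bar> \<le> real (card T) * Q" using e2_bound[OF insert(1)] unfolding Q_def .
  have "\<bar>rem u (insert t T)\<bar> \<le> \<bar>rem u T\<bar> + \<bar>u t\<bar> * (\<bar>e2 u T\<bar> + \<bar>rem u T\<bar>)"
  proof -
    have "\<bar>e2 u T + rem u T\<bar> \<le> \<bar>e2 u T\<bar> + \<bar>rem u T\<bar>" by (rule abs_triangle_ineq)
    then have "\<bar>u t * (e2 u T + rem u T)\<bar> \<le> \<bar>u t\<bar> * (\<bar>e2 u T\<bar> + \<bar>rem u T\<bar>)"
      by (simp add: abs_mult mult_left_mono)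
    moreover have "\<bar>rem u T + u t * (e2 u T + rem u T)\<bar> \<le> \<bar>rem u T\<bar> + \<bar>u t * (e2 u T + rem u T)\<bar>"
      by (rule abs_triangle_ineq)
    ultimately show ?thesis unfolding rem_insert[OF insert(1,2)] by linarith
  qed
  also have "\<dots> \<le> \<bar>rem u T\<bar> + m * (real (card T) * Q + \<bar>rem u T\<bar>)"
    using ut E by (intro add_left_mono mult_mono) auto
  also have "\<dots> \<le> 2 * \<bar>rem u T\<bar> + m * real (card T) * Q"
  proof -
    have "m * \<bar>rem u T\<bar> \<le> \<bar>rem u T\<bar>" using insert.prems by (simp add: mult_left_le_one_le)
    then show ?thesis by (simp add: algebra_simps)
  qed
  also have "\<dots> \<le> 2 * (m * real (card T) * Q * (2 ^ card T - 1)) + m * real (card T) * Q"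
    using IH by simp
  also have "\<dots> = m * real (card T) * Q * (2 ^ Suc (card T) - 1)" by (simp add: algebra_simps)
  also have "\<dots> \<le> m * real (card (insert t T)) * Q' * (2 ^ card (insert t T) - 1)"
  proof -
    have "(1::real) \<le> 2 ^ Suc (card T)" by (rule one_le_power) simp
    then show ?thesis using insert QQ
      by (intro mult_mono) (auto intro: mult_nonneg_nonneg)
  qed
  finally show ?case unfolding Q'_def .
qed


lemma sum_diff_if: "finite V \<Longrightarrow> (\<Sum>i\<in>V - S. g i) = (\<Sum>i\<in>V. if i \<notin> S then g i else (0::real))"
proof -
  assume V: "finite V"
  have "V - S = {i\<in>V. i \<notin> S}" by auto
  then show ?thesis by (simp only:) (rule sum.inter_filter[OF V])
qed

lemma swap1:
  fixes w :: "nat set \<Rightarrow> real" and u :: "nat \<Rightarrow> real"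
  assumes "finite P" "finite V"
  shows "(\<Sum>S\<in>P. w S * (\<Sum>i\<in>V - S. u i)) = (\<Sum>i\<in>V. u i * (\<Sum>S\<in>{S\<in>P. i \<notin> S}. w S))"
proof -
  have "(\<Sum>S\<in>P. w S * (\<Sum>i\<in>V - S. u i)) = (\<Sum>S\<in>P. \<Sum>i\<in>V. if i \<notin> S then w S * u i else 0)"
  proof (rule sum.cong)
    fix S
    show "w S * (\<Sum>i\<in>V - S. u i) = (\<Sum>i\<in>V. if i \<notin> S then w S * u i else 0)"
      unfolding sum_diff_if[OF assms(2)] sum_distrib_left by (rule sum.cong) auto
  qed simp
  also have "\<dots> = (\<Sum>i\<in>V. \<Sum>S\<in>P. if i \<notin> S then w S * u i else 0)" by (rule sum.swap)
  also have "\<dots> = (\<Sum>i\<in>V. u i * (\<Sum>S\<in>{S\<in>P. i \<notin> S}. w S))"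
    unfolding sum.inter_filter[OF assms(1)] sum_distrib_left by (intro sum.cong) auto
  finally show ?thesis .
qed

lemma swap2:
  fixes w :: "nat set \<Rightarrow> real" and f :: "nat \<Rightarrow> nat \<Rightarrow> real"
  assumes "finite P" "finite V"
  shows "(\<Sum>S\<in>P. w S * (\<Sum>i\<in>V - S. \<Sum>j\<in>V - S - {i}. f i j))
       = (\<Sum>i\<in>V. \<Sum>j\<in>V - {i}. f i j * (\<Sum>S\<in>{S\<in>P. i \<notin> S \<and> j \<notin> S}. w S))"
proof -
  have "(\<Sum>S\<in>P. w S * (\<Sum>i\<in>V - S. \<Sum>j\<in>V - S - {i}. f i j))
      = (\<Sum>S\<in>P. \<Sum>i\<in>V. \<Sum>j\<in>V - {i}. if i \<notin> S \<and> j \<notin> S then w S * f i j else 0)"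
  proof (rule sum.cong)
    fix S
    have "(\<Sum>i\<in>V - S. \<Sum>j\<in>V - S - {i}. f i j) = (\<Sum>i\<in>V. \<Sum>j\<in>V - {i}. if i \<notin> S \<and> j \<notin> S then f i j else 0)"
    proof -
      have "(\<Sum>i\<in>V - S. \<Sum>j\<in>V - S - {i}. f i j) = (\<Sum>i\<in>V. if i \<notin> S then (\<Sum>j\<in>V - S - {i}. f i j) else 0)"
        by (rule sum_diff_if[OF assms(2)])
      also have "\<dots> = (\<Sum>i\<in>V. \<Sum>j\<in>V - {i}. if i \<notin> S \<and> j \<notin> S then f i j else 0)"
      proof (rule sum.cong)
        fix i
        have "V - S - {i} = (V - {i}) - S" by auto
        then show "(if i \<notin> S then (\<Sum>j\<in>V - S - {i}. f i j) else 0) = (\<Sum>j\<in>V - {i}. if i \<notin> S \<and> j \<notin> S then f i j else 0)"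
          using sum_diff_if[where V="V - {i}" and S=S and g="f i"] assms(2) by simp
      qed simp
      finally show ?thesis .
    qed
    note E = this
    show "w S * (\<Sum>i\<in>V - S. \<Sum>j\<in>V - S - {i}. f i j) = (\<Sum>i\<in>V. \<Sum>j\<in>V - {i}. if i \<notin> S \<and> j \<notin> S then w S * f i j else 0)"
      unfolding E sum_distrib_left by (intro sum.cong) auto
  qed simp
  also have "\<dots> = (\<Sum>i\<in>V. \<Sum>S\<in>P. \<Sum>j\<in>V - {i}. if i \<notin> S \<and> j \<notin> S then w S * f i j else 0)" by (rule sum.swap)
  also have "\<dots> = (\<Sum>i\<in>V. \<Sum>j\<in>V - {i}. \<Sum>S\<in>P. if i \<notin> S \<and> j \<notin> S then w S * f i j else 0)"
    by (rule sum.cong[OF refl], rule sum.swap)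
  also have "\<dots> = (\<Sum>i\<in>V. \<Sum>j\<in>V - {i}. f i j * (\<Sum>S\<in>{S\<in>P. i \<notin> S \<and> j \<notin> S}. w S))"
    unfolding sum.inter_filter[OF assms(1)] sum_distrib_left by (intro sum.cong) auto
  finally show ?thesis .
qed

lemma e2_double: "finite T \<Longrightarrow> e2 u T = (\<Sum>i\<in>T. \<Sum>j\<in>T - {i}. u i * u j) / 2"
proof -
  assume T: "finite T"
  have "(\<Sum>i\<in>T. u i)^2 = (\<Sum>i\<in>T. \<Sum>j\<in>T. u i * u j)"
    by (simp add: power2_eq_square sum_product)
  also have "\<dots> = (\<Sum>i\<in>T. (u i)^2 + (\<Sum>j\<in>T - {i}. u i * u j))"
    by (rule sum.cong[OF refl]) (use T in \<open>simp add: sum.remove power2_eq_square\<close>)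
  finally show ?thesis unfolding e2_def by (simp add: sum.distrib)
qed

lemma double_sq: fixes u :: "nat \<Rightarrow> real" shows "finite V \<Longrightarrow> (\<Sum>i\<in>V. \<Sum>j\<in>V - {i}. u i * u j) = (\<Sum>i\<in>V. u i)^2 - (\<Sum>i\<in>V. (u i)^2)"
  using e2_double[where T=V and u=u] unfolding e2_def by simp


lemma tay1:
  fixes x \<tau> :: real
  assumes "\<bar>x\<bar> \<le> \<tau>"
  shows "x + x^2 * (1/2 - exp \<tau> * \<tau> / 6) \<le> exp x - 1"
proof -
  obtain t where t: "\<bar>t\<bar> \<le> \<bar>x\<bar>" "exp x = (\<Sum>m<3. x ^ m / fact m) + exp t / fact 3 * x ^ 3"
    using Maclaurin_exp_le[of x 3] by blast
  have s: "(\<Sum>m<3. x ^ m / fact m) = 1 + x + x^2/2"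
    by (simp add: numeral_3_eq_3 power2_eq_square)
  have "\<bar>exp t * x^3\<bar> \<le> exp \<tau> * \<tau> * x^2"
  proof -
    have "\<bar>exp t * x^3\<bar> = exp t * (\<bar>x\<bar> * x^2)" by (simp add: abs_mult power_abs power3_eq_cube power2_eq_square)
    also have "\<dots> \<le> exp \<tau> * (\<tau> * x^2)"
      using t(1) assms by (intro mult_mono) (auto intro: mult_right_mono)
    finally show ?thesis by simp
  qed
  then have "- (exp \<tau> * \<tau> * x^2) / 6 \<le> exp t / fact 3 * x ^ 3"
    by (simp add: fact_numeral abs_le_iff)
  then show ?thesis using t(2) s by (simp add: algebra_simps)
qed

lemma tay2:
  fixes x :: real
  shows "\<bar>exp x - 1\<bar> \<le> exp \<bar>x\<bar> * \<bar>x\<bar>"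
proof -
  obtain t where t: "\<bar>t\<bar> \<le> \<bar>x\<bar>" "exp x = (\<Sum>m<1. x ^ m / fact m) + exp t / fact 1 * x ^ 1"
    using Maclaurin_exp_le[of x 1] by blast
  then have "exp x - 1 = exp t * x" by simp
  moreover have "exp t \<le> exp \<bar>x\<bar>" using t(1) by simp
  ultimately show ?thesis by (simp add: abs_mult mult_right_mono)
qed

lemma final_ineq:
  fixes s Q \<beta> c1 c2 \<mu> C R N :: real
  assumes "\<beta> * Q \<le> s" "0 \<le> \<beta>" "0 \<le> Q" "s \<le> N * \<mu>" "0 \<le> c1 - \<bar>c2\<bar> * N * \<mu> / 2"
    "\<bar>R\<bar> \<le> C * \<mu> * Q" "0 \<le> \<beta> * (c1 - \<bar>c2\<bar> * N * \<mu> / 2) - c2 / 2 - C * \<mu>"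
  shows "0 \<le> c1 * s + c2 / 2 * (s^2 - Q) + R"
proof -
  have s0: "0 \<le> s" using assms(1-3) by (meson mult_nonneg_nonneg order_trans)
  have "s * s \<le> s * (N * \<mu>)" using s0 assms(4) by (rule mult_left_mono[rotated])
  then have "- (\<bar>c2\<bar> / 2) * (s * (N * \<mu>)) \<le> - (\<bar>c2\<bar> / 2) * (s * s)" by (simp add: mult_left_mono)
  moreover have "- (\<bar>c2\<bar> / 2) * (s * s) \<le> c2 / 2 * s^2"
  proof -
    have "-(\<bar>c2\<bar>/2) \<le> c2/2" by simp
    from mult_right_mono[OF this, of "s * s"] show ?thesis by (simp add: power2_eq_square)
  qed
  ultimately have a: "s * (c1 - \<bar>c2\<bar> * N * \<mu> / 2) \<le> c1 * s + c2 / 2 * s^2" by (simp add: algebra_simps)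
  have b: "\<beta> * Q * (c1 - \<bar>c2\<bar> * N * \<mu> / 2) \<le> s * (c1 - \<bar>c2\<bar> * N * \<mu> / 2)"
    using assms(1,5) by (rule mult_right_mono)
  have c: "0 \<le> Q * (\<beta> * (c1 - \<bar>c2\<bar> * N * \<mu> / 2) - c2 / 2 - C * \<mu>)"
    using assms(3,7) by simp
  show ?thesis using a b c assms(6) by (simp add: algebra_simps abs_le_iff)
qed


lemma cont_pos: fixes G :: "real \<Rightarrow> real" assumes "isCont G (0::real)" "0 < G 0" shows "\<exists>d>0. \<forall>t. \<bar>t\<bar> < d \<longrightarrow> 0 < G t"
proof -
  have "(G \<longlongrightarrow> G 0) (at 0)" using assms(1) isCont_def by blast
  from order_tendstoD(1)[OF this assms(2)] have "eventually (\<lambda>t. 0 < G t) (at 0)" .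
  then have "\<exists>d>0. \<forall>t\<in>UNIV. t \<noteq> 0 \<and> dist t 0 < d \<longrightarrow> 0 < G t" unfolding eventually_at .
  then obtain d where d: "d > 0" "\<And>t. t \<noteq> 0 \<Longrightarrow> dist t 0 < d \<Longrightarrow> 0 < G t" by blast
  show ?thesis
  proof (intro exI[of _ d] conjI allI impI)
    fix t :: real assume "\<bar>t\<bar> < d"
    then show "0 < G t" using d assms(2) by (cases "t = 0") auto
  qed (use d in auto)
qed

lemma rep:
  assumes q: "q \<in> simplexC k" and e: "0 < \<epsilon>"
  shows "eq_loss k n \<epsilon> q = real n * (1 - \<epsilon>) - real k +
    (\<Sum>\<delta>=1..k. Kc \<delta> * (\<Sum>S\<in>Xi k (k - \<delta>). \<Prod>i\<in>{1..<2^k} - S. exp (real n * q i * ln \<epsilon>)))"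
proof -
  have *: "\<epsilon> powr (real n * (1 - zeta S q)) = (\<Prod>i\<in>{1..<2^k} - S. exp (real n * q i * ln \<epsilon>))"
    if S: "S \<in> Xi k (k - \<delta>)" for S \<delta>
  proof -
  have Ss: "is_subspace k S" using S by (simp add: Xi_def)
  have sub: "S \<subseteq> {..<2^k}" using Ss unfolding is_subspace_def by auto
  have one: "(\<Sum>i<2^k. q i) = 1" using q unfolding simplexC_def by auto
  have "(\<Sum>i<2^k. q i) = (\<Sum>i\<in>{..<2^k} - S. q i) + (\<Sum>i\<in>S. q i)"
    by (rule sum.subset_diff[OF sub]) simp
  moreover have "{..<2^k} - S = {1..<2^k} - S" using sub_zero[OF Ss] by (auto simp: Suc_le_eq) (metis neq0_conv)
  ultimately have z: "1 - zeta S q = (\<Sum>i\<in>{1..<2^k} - S. q i)" using one unfolding zeta_def by simp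
  show ?thesis
  proof -
    have "real n * (\<Sum>i\<in>{1..<2^k} - S. q i) * ln \<epsilon> = (\<Sum>i\<in>{1..<2^k} - S. real n * q i * ln \<epsilon>)"
      by (simp add: sum_distrib_left sum_distrib_right)
    then have "\<epsilon> powr (real n * (\<Sum>i\<in>{1..<2^k} - S. q i)) = exp (\<Sum>i\<in>{1..<2^k} - S. real n * q i * ln \<epsilon>)"
      using e by (simp add: powr_def)
    also have "\<dots> = (\<Prod>i\<in>{1..<2^k} - S. exp (real n * q i * ln \<epsilon>))" by (rule exp_sum) simp
    finally show ?thesis unfolding z .
  qed
  qed
  show ?thesis unfolding eq_loss_def
    by (rule arg_cong[where f="\<lambda>t. real n * (1 - \<epsilon>) - real k + t"], rule sum.cong[OF refl],
        rule arg_cong[where f="\<lambda>t. Kc _ * t"], rule sum.cong[OF refl], rule *)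
qed


lemma swapK: "(\<Sum>\<delta>\<in>D. a \<delta> * (\<Sum>i\<in>I. f i * g \<delta> i)) = (\<Sum>i\<in>I. f i * (\<Sum>\<delta>\<in>D. a \<delta> * (g \<delta> i::real)))"
proof -
  have "(\<Sum>\<delta>\<in>D. a \<delta> * (\<Sum>i\<in>I. f i * g \<delta> i)) = (\<Sum>\<delta>\<in>D. \<Sum>i\<in>I. f i * (a \<delta> * g \<delta> i))"
    by (simp add: sum_distrib_left mult.left_commute)
  also have "\<dots> = (\<Sum>i\<in>I. \<Sum>\<delta>\<in>D. f i * (a \<delta> * g \<delta> i))" by (rule sum.swap)
  also have "\<dots> = (\<Sum>i\<in>I. f i * (\<Sum>\<delta>\<in>D. a \<delta> * (g \<delta> i::real)))" by (simp add: sum_distrib_left)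
  finally show ?thesis .
qed

lemma swapK2: "(\<Sum>\<delta>\<in>D. a \<delta> * (\<Sum>i\<in>I. \<Sum>j\<in>J i. f i j * g \<delta> i j)) = (\<Sum>i\<in>I. \<Sum>j\<in>J i. f i j * (\<Sum>\<delta>\<in>D. a \<delta> * (g \<delta> i j::real)))"
proof -
  have "(\<Sum>\<delta>\<in>D. a \<delta> * (\<Sum>i\<in>I. \<Sum>j\<in>J i. f i j * g \<delta> i j)) = (\<Sum>\<delta>\<in>D. \<Sum>i\<in>I. \<Sum>j\<in>J i. f i j * (a \<delta> * g \<delta> i j))"
    by (simp add: sum_distrib_left mult.left_commute)
  also have "\<dots> = (\<Sum>i\<in>I. \<Sum>\<delta>\<in>D. \<Sum>j\<in>J i. f i j * (a \<delta> * g \<delta> i j))" by (rule sum.swap)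
  also have "\<dots> = (\<Sum>i\<in>I. \<Sum>j\<in>J i. \<Sum>\<delta>\<in>D. f i j * (a \<delta> * g \<delta> i j))" by (rule sum.cong[OF refl], rule sum.swap)
  also have "\<dots> = (\<Sum>i\<in>I. \<Sum>j\<in>J i. f i j * (\<Sum>\<delta>\<in>D. a \<delta> * (g \<delta> i j::real)))" by (simp add: sum_distrib_left)
  finally show ?thesis .
qed

theorem theorem3:
  fixes \<kappa> n :: nat and \<epsilon> :: real
  assumes "\<kappa> \<ge> 1" and "n \<ge> 1" and "0 < \<epsilon>" and "\<epsilon> < 1"
  shows "local_minimizer_on \<kappa> (eq_loss \<kappa> n \<epsilon>) (simplexC \<kappa>) (qbar \<kappa>)"
proof -
  note k1 = assms(1) and n1 = assms(2) and e0 = assms(3) and e1 = assms(4)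
  define N :: nat where "N = 2^\<kappa>"
  define V where "V = {1::nat..<N}"
  define lam where "lam = ln \<epsilon>"
  have lam: "lam < 0" using e0 e1 by (simp add: lam_def)
  have N2: "2 \<le> N" using power_increasing[of 1 \<kappa> "2::nat"] k1 unfolding N_def by simp
  have NR: "real N = 2^\<kappa>" unfolding N_def by simp
  have Nr: "1 < real N" using N2 by simp
  have finV: "finite V" unfolding V_def by simp
  have cardV: "card V = N - 1" unfolding V_def by simp
  have qbV: "\<And>i. i \<in> V \<Longrightarrow> qbar \<kappa> i = 1 / (real N - 1)" unfolding V_def qbar_def NR by auto
  define x where "x = exp (real n * lam / (real N - 1))"
  have nlam: "real n * lam < 0" using n1 lam by (simp add: mult_pos_neg)
  have x: "0 < x" "x < 1" unfolding x_def using nlam Nr by (auto simp: divide_neg_pos)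
  define P where "P q i = exp (real n * q i * lam)" for q :: "nat \<Rightarrow> real" and i
  have Pqb: "\<And>i. i \<in> V \<Longrightarrow> P (qbar \<kappa>) i = x" unfolding P_def x_def using qbV by simp
  define X where "X \<delta> = Xi \<kappa> (\<kappa> - \<delta>)" for \<delta>
  have finX: "\<And>\<delta>. finite (X \<delta>)" unfolding X_def by (rule fin_Xi)
  define w where "w S = x ^ card (V - S)" for S
  define Phi where "Phi q = (\<Sum>\<delta>=1..\<kappa>. Kc \<delta> * (\<Sum>S\<in>X \<delta>. \<Prod>i\<in>V - S. P q i))" for q
  have rep': "\<And>q. q \<in> simplexC \<kappa> \<Longrightarrow> eq_loss \<kappa> n \<epsilon> q = real n * (1 - \<epsilon>) - real \<kappa> + Phi q"
    using rep[OF _ e0] unfolding Phi_def X_def V_def N_def P_def lam_def by simp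
  have qbC: "qbar \<kappa> \<in> simplexC \<kappa>"
  proof -
    have "(\<Sum>i<2^\<kappa>. qbar \<kappa> i) = (\<Sum>i\<in>insert 0 V. qbar \<kappa> i)"
      unfolding V_def N_def by (rule sum.cong) auto
    also have "\<dots> = qbar \<kappa> 0 + (\<Sum>i\<in>V. qbar \<kappa> i)" by (rule sum.insert[OF finV]) (simp add: V_def)
    also have "\<dots> = (\<Sum>i\<in>V. 1 / (real N - 1))" using qbV by (simp add: qbar_def[of _ 0])
    also have "\<dots> = 1" using cardV Nr N2 by (simp add: of_nat_diff)
    finally show ?thesis unfolding simplexC_def qbar_def by auto
  qed
  have Phiqb: "Phi (qbar \<kappa>) = (\<Sum>\<delta>=1..\<kappa>. Kc \<delta> * (\<Sum>S\<in>X \<delta>. w S))"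
    unfolding Phi_def w_def using Pqb by (intro sum.cong refl arg_cong[where f="\<lambda>t. Kc _ * t"]) simp
  define c1 where "c1 = C1 \<kappa> x"
  define c2 where "c2 = (if 2 \<le> \<kappa> then C2 \<kappa> x else 0)"
  have c1: "0 < c1" unfolding c1_def using C1_pos[OF k1 x] .
  have c12: "c2 < c1" unfolding c2_def using C12_pos[OF _ x] c1 c1_def by auto
  define Cc where "Cc = (\<Sum>\<delta>=1..\<kappa>. \<bar>Kc \<delta>\<bar> * real (card (X \<delta>))) * real N * 2^N"
  have Cc0: "0 \<le> Cc" unfolding Cc_def by (intro mult_nonneg_nonneg sum_nonneg) auto
  define NN where "NN = real N"
  define \<beta> where "\<beta> t = exp (-2*t) * (1/2 - exp t * t / 6)" for t :: real
  define \<mu> where "\<mu> t = t * exp t" for t :: real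
  obtain d1 where d1: "d1 > 0" "\<And>t::real. \<bar>t\<bar> < d1 \<Longrightarrow> 0 < 1/2 - exp t * t / 6"
    using cont_pos[of "\<lambda>t. 1/2 - exp t * t / 6"] by (auto intro!: continuous_intros)
  obtain d2 where d2: "d2 > 0" "\<And>t::real. \<bar>t\<bar> < d2 \<Longrightarrow> 0 < 1 - \<mu> t"
    using cont_pos[of "\<lambda>t. 1 - \<mu> t"] unfolding \<mu>_def by (auto intro!: continuous_intros)
  obtain d3 where d3: "d3 > 0" "\<And>t::real. \<bar>t\<bar> < d3 \<Longrightarrow> 0 < c1 - \<bar>c2\<bar> * NN * \<mu> t / 2"
    using cont_pos[of "\<lambda>t. c1 - \<bar>c2\<bar> * NN * \<mu> t / 2"] c1 unfolding \<mu>_def by (auto intro!: continuous_intros)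
  obtain d4 where d4: "d4 > 0" "\<And>t::real. \<bar>t\<bar> < d4 \<Longrightarrow> 0 < \<beta> t * (c1 - \<bar>c2\<bar> * NN * \<mu> t / 2) - c2 / 2 - Cc * \<mu> t"
    using cont_pos[of "\<lambda>t. \<beta> t * (c1 - \<bar>c2\<bar> * NN * \<mu> t / 2) - c2 / 2 - Cc * \<mu> t"] c12
    unfolding \<mu>_def \<beta>_def by (auto intro!: continuous_intros)
  define \<tau> where "\<tau> = min (min d1 d2) (min d3 d4) / 2"
  have \<tau>0: "0 < \<tau>" unfolding \<tau>_def using d1 d2 d3 d4 by simp
  have \<tau>a: "\<bar>\<tau>\<bar> < d1" "\<bar>\<tau>\<bar> < d2" "\<bar>\<tau>\<bar> < d3" "\<bar>\<tau>\<bar> < d4" unfolding \<tau>_def using d1 d2 d3 d4 by auto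
  note C1' = d1(2)[OF \<tau>a(1)] and C2' = d2(2)[OF \<tau>a(2)] and C3' = d3(2)[OF \<tau>a(3)] and C4' = d4(2)[OF \<tau>a(4)]
  define e where "e = \<tau> / (real n * (- lam))"
  have nl: "0 < real n * (- lam)" using nlam by simp
  have epos: "0 < e" unfolding e_def using \<tau>0 nl by (rule divide_pos_pos)
  show ?thesis unfolding local_minimizer_on_def
  proof (intro conjI qbC exI[of _ e] epos ballI impI)
    fix q' assume q': "q' \<in> simplexC \<kappa>" and close: "\<forall>i<2^\<kappa>. \<bar>q' i - qbar \<kappa> i\<bar> < e"
    define xi where "xi i = real n * lam * (q' i - qbar \<kappa> i)" for i
    define u where "u i = exp (xi i) - 1" for i
    have xib: "\<And>i. i \<in> V \<Longrightarrow> \<bar>xi i\<bar> \<le> \<tau>"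
    proof -
      fix i assume i: "i \<in> V"
      then have "i < 2^\<kappa>" unfolding V_def N_def by simp
      then have c: "\<bar>q' i - qbar \<kappa> i\<bar> \<le> e" using close by (simp add: less_imp_le)
      have "\<bar>xi i\<bar> = (real n * (- lam)) * \<bar>q' i - qbar \<kappa> i\<bar>" unfolding xi_def using lam
        by (simp add: abs_mult)
      also have "\<dots> \<le> (real n * (- lam)) * e" using c nl by (intro mult_left_mono) auto
      also have "\<dots> = \<tau>" unfolding e_def using nl n1 lam by (simp add: field_simps)
      finally show "\<bar>xi i\<bar> \<le> \<tau>" .
    qed
    have Pq': "\<And>i. i \<in> V \<Longrightarrow> P q' i = x * (1 + u i)"
    proof -
      fix i assume i: "i \<in> V"
      have "real n * q' i * lam = real n * lam * qbar \<kappa> i + xi i"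
        unfolding xi_def by (simp add: algebra_simps)
      then have "real n * q' i * lam = real n * lam / (real N - 1) + xi i"
        unfolding qbV[OF i] by simp
      then show "P q' i = x * (1 + u i)" unfolding P_def x_def u_def by (simp add: exp_add)
    qed
    define s where "s = (\<Sum>i\<in>V. u i)"
    define Q where "Q = (\<Sum>i\<in>V. (u i)^2)"
    define R where "R = (\<Sum>\<delta>=1..\<kappa>. Kc \<delta> * (\<Sum>S\<in>X \<delta>. w S * rem u (V - S)))"
    have prodS: "\<And>S. (\<Prod>i\<in>V - S. P q' i) = w S * (1 + (\<Sum>i\<in>V - S. u i) + e2 u (V - S) + rem u (V - S))"
    proof -
      fix S
      have "(\<Prod>i\<in>V - S. P q' i) = (\<Prod>i\<in>V - S. x * (1 + u i))" by (rule prod.cong) (auto simp: Pq')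
      also have "\<dots> = x ^ card (V - S) * (\<Prod>i\<in>V - S. 1 + u i)" by (simp add: prod.distrib)
      also have "(\<Prod>i\<in>V - S. 1 + u i) = 1 + (\<Sum>i\<in>V - S. u i) + e2 u (V - S) + rem u (V - S)"
        unfolding rem_def by simp
      finally show "(\<Prod>i\<in>V - S. P q' i) = w S * (1 + (\<Sum>i\<in>V - S. u i) + e2 u (V - S) + rem u (V - S))"
        unfolding w_def by simp
    qed
    define T1 where "T1 = (\<Sum>\<delta>=1..\<kappa>. Kc \<delta> * (\<Sum>S\<in>X \<delta>. w S * (\<Sum>i\<in>V - S. u i)))"
    define T2 where "T2 = (\<Sum>\<delta>=1..\<kappa>. Kc \<delta> * (\<Sum>S\<in>X \<delta>. w S * e2 u (V - S)))"
    have split: "Phi q' = Phi (qbar \<kappa>) + T1 + T2 + R"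
      unfolding Phi_def[of q'] prodS Phiqb R_def T1_def T2_def
      by (simp add: distrib_left sum.distrib)
    have VV: "V = {1..<2^\<kappa>}" unfolding V_def N_def ..
    have T1v: "T1 = c1 * s"
    proof -
      have "T1 = (\<Sum>\<delta>=1..\<kappa>. Kc \<delta> * (\<Sum>i\<in>V. u i * (\<Sum>S\<in>{S\<in>X \<delta>. i \<notin> S}. w S)))"
        unfolding T1_def by (simp add: swap1[OF finX finV])
      also have "\<dots> = (\<Sum>i\<in>V. u i * (\<Sum>\<delta>=1..\<kappa>. Kc \<delta> * (\<Sum>S\<in>{S\<in>X \<delta>. i \<notin> S}. w S)))"
        by (rule swapK)
      also have "\<dots> = (\<Sum>i\<in>V. u i * c1)"
      proof (rule sum.cong[OF refl])
        fix i assume i: "i \<in> V"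
        have "(\<Sum>\<delta>=1..\<kappa>. Kc \<delta> * (\<Sum>S\<in>{S\<in>X \<delta>. i \<notin> S}. w S)) = cc1 \<kappa> x i"
          unfolding cc1_def X_def w_def VV ..
        also have "\<dots> = c1" unfolding c1_def using i VV by (simp add: cc1_eq)
        finally show "u i * (\<Sum>\<delta>=1..\<kappa>. Kc \<delta> * (\<Sum>S\<in>{S\<in>X \<delta>. i \<notin> S}. w S)) = u i * c1" by simp
      qed
      finally show ?thesis unfolding s_def by (simp add: sum_distrib_left mult.commute)
    qed
    define DS where "DS = (\<Sum>i\<in>V. \<Sum>j\<in>V - {i}. u i * u j)"
    have DSv: "DS = s^2 - Q" unfolding DS_def s_def Q_def by (rule double_sq[OF finV])
    have T2v: "T2 = C2 \<kappa> x / 2 * DS"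
    proof -
      have "T2 = (\<Sum>\<delta>=1..\<kappa>. Kc \<delta> * (\<Sum>S\<in>X \<delta>. w S * (\<Sum>i\<in>V - S. \<Sum>j\<in>V - S - {i}. u i * u j))) / 2"
      proof -
        have e: "\<And>S. w S * e2 u (V - S) = (w S * (\<Sum>i\<in>V - S. \<Sum>j\<in>V - S - {i}. u i * u j)) / 2"
          using finV by (simp add: e2_double)
        show ?thesis unfolding T2_def e
          by (simp only: sum_divide_distrib[symmetric] times_divide_eq_right)
      qed
      also have "\<dots> = (\<Sum>\<delta>=1..\<kappa>. Kc \<delta> * (\<Sum>i\<in>V. \<Sum>j\<in>V - {i}. (u i * u j) * (\<Sum>S\<in>{S\<in>X \<delta>. i \<notin> S \<and> j \<notin> S}. w S))) / 2"
        by (simp add: swap2[OF finX finV])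
      also have "\<dots> = (\<Sum>i\<in>V. \<Sum>j\<in>V - {i}. (u i * u j) * (\<Sum>\<delta>=1..\<kappa>. Kc \<delta> * (\<Sum>S\<in>{S\<in>X \<delta>. i \<notin> S \<and> j \<notin> S}. w S))) / 2"
        by (subst swapK2) simp
      also have "\<dots> = (\<Sum>i\<in>V. \<Sum>j\<in>V - {i}. (u i * u j) * C2 \<kappa> x) / 2"
      proof -
        have "\<And>i j. i \<in> V \<Longrightarrow> j \<in> V - {i} \<Longrightarrow> (\<Sum>\<delta>=1..\<kappa>. Kc \<delta> * (\<Sum>S\<in>{S\<in>X \<delta>. i \<notin> S \<and> j \<notin> S}. w S)) = C2 \<kappa> x"
        proof -
          fix i j assume ij: "i \<in> V" "j \<in> V - {i}"
          have "(\<Sum>\<delta>=1..\<kappa>. Kc \<delta> * (\<Sum>S\<in>{S\<in>X \<delta>. i \<notin> S \<and> j \<notin> S}. w S)) = cc2 \<kappa> x i j"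
            unfolding cc2_def X_def w_def VV ..
          also have "\<dots> = C2 \<kappa> x" using ij VV by (intro cc2_eq) auto
          finally show "(\<Sum>\<delta>=1..\<kappa>. Kc \<delta> * (\<Sum>S\<in>{S\<in>X \<delta>. i \<notin> S \<and> j \<notin> S}. w S)) = C2 \<kappa> x" .
        qed
        then show ?thesis by (intro arg_cong[where f="\<lambda>t. t / 2"] sum.cong refl) auto
      qed
      also have "\<dots> = C2 \<kappa> x / 2 * DS" unfolding DS_def by (simp add: sum_distrib_left sum_distrib_right mult.commute mult.left_commute)
      finally show ?thesis .
    qed
    have T2c: "T2 = c2 / 2 * (s^2 - Q)"
    proof (cases "2 \<le> \<kappa>")
      case True then show ?thesis unfolding c2_def T2v DSv by simp
    next
      case False
      then have "\<kappa> = 1" using k1 by simp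
      then have "V = {1}" unfolding V_def N_def by auto
      then have "DS = 0" unfolding DS_def by simp
      then show ?thesis using T2v DSv by simp
    qed
    have diff: "Phi q' - Phi (qbar \<kappa>) = c1 * s + c2 / 2 * (s^2 - Q) + R"
      using split T1v T2c by simp
    have mu0: "0 \<le> \<mu> \<tau>" unfolding \<mu>_def using \<tau>0 by simp
    have ub: "\<And>i. i \<in> V \<Longrightarrow> \<bar>u i\<bar> \<le> \<mu> \<tau>"
    proof -
      fix i assume i: "i \<in> V"
      have "\<bar>u i\<bar> \<le> exp \<bar>xi i\<bar> * \<bar>xi i\<bar>" unfolding u_def by (rule tay2)
      also have "\<dots> \<le> exp \<tau> * \<tau>" using xib[OF i] by (intro mult_mono) auto
      finally show "\<bar>u i\<bar> \<le> \<mu> \<tau>" unfolding \<mu>_def by (simp add: mult.commute)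
    qed
    have ub2: "\<And>i. i \<in> V \<Longrightarrow> exp (-2*\<tau>) * (u i)^2 \<le> (xi i)^2"
    proof -
      fix i assume i: "i \<in> V"
      have "\<bar>u i\<bar> \<le> exp \<bar>xi i\<bar> * \<bar>xi i\<bar>" unfolding u_def by (rule tay2)
      also have "\<dots> \<le> exp \<tau> * \<bar>xi i\<bar>" using xib[OF i] by (intro mult_right_mono) auto
      finally have "\<bar>u i\<bar>^2 \<le> (exp \<tau> * \<bar>xi i\<bar>)^2" by (intro power_mono) auto
      then have "(u i)^2 \<le> exp \<tau> ^ 2 * (xi i)^2" by (simp add: power_mult_distrib)
      then have "exp (-2*\<tau>) * (u i)^2 \<le> exp (-2*\<tau>) * (exp \<tau> ^ 2 * (xi i)^2)" by (simp add: mult_left_mono)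
      also have "\<dots> = (xi i)^2" by (simp add: exp_add[symmetric] power2_eq_square mult.assoc[symmetric])
      finally show "exp (-2*\<tau>) * (u i)^2 \<le> (xi i)^2" .
    qed
    have sumV: "\<And>q::nat\<Rightarrow>real. (\<Sum>i<2^\<kappa>. q i) = q 0 + (\<Sum>i\<in>V. q i)"
    proof -
      fix q :: "nat \<Rightarrow> real"
      have "{..<2^\<kappa>} = insert 0 V" unfolding V_def N_def by auto
      moreover have "0 \<notin> V" unfolding V_def by simp
      ultimately show "(\<Sum>i<2^\<kappa>. q i) = q 0 + (\<Sum>i\<in>V. q i)" using finV by simp
    qed
    have sxi: "0 \<le> (\<Sum>i\<in>V. xi i)"
    proof -
      have a: "(\<Sum>i\<in>V. q' i) = 1 - q' 0" using q' sumV[of q'] unfolding simplexC_def by simp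
      have b: "(\<Sum>i\<in>V. qbar \<kappa> i) = 1" using qbC sumV[of "qbar \<kappa>"] unfolding simplexC_def
        by (simp add: qbar_def)
      have c: "0 \<le> q' 0" using q' unfolding simplexC_def by simp
      have "(\<Sum>i\<in>V. xi i) = real n * lam * ((\<Sum>i\<in>V. q' i) - (\<Sum>i\<in>V. qbar \<kappa> i))"
        unfolding xi_def by (simp add: sum_distrib_left sum_subtractf right_diff_distrib)
      also have "\<dots> = (- (real n * lam)) * q' 0" using a b by simp
      finally show ?thesis using c nlam by (simp add: mult_nonpos_nonneg less_imp_le)
    qed
    have sQ: "\<beta> \<tau> * Q \<le> s"
    proof -
      define \<gamma> where "\<gamma> = 1/2 - exp \<tau> * \<tau> / 6"
      have g0: "0 \<le> \<gamma>" unfolding \<gamma>_def using C1' by simp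
      have "exp (-2*\<tau>) * Q \<le> (\<Sum>i\<in>V. (xi i)^2)"
        unfolding Q_def sum_distrib_left by (rule sum_mono) (rule ub2)
      then have "\<beta> \<tau> * Q \<le> \<gamma> * (\<Sum>i\<in>V. (xi i)^2)"
        unfolding \<beta>_def \<gamma>_def[symmetric] using g0 by (metis mult.assoc mult.commute mult_left_mono)
      also have "\<dots> \<le> (\<Sum>i\<in>V. xi i) + \<gamma> * (\<Sum>i\<in>V. (xi i)^2)" using sxi by simp
      also have "\<dots> = (\<Sum>i\<in>V. xi i + (xi i)^2 * \<gamma>)" by (simp add: sum.distrib sum_distrib_left mult.commute)
      also have "\<dots> \<le> s" unfolding s_def u_def \<gamma>_def by (rule sum_mono) (rule tay1[OF xib])
      finally show ?thesis .
    qed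
    have sN: "s \<le> NN * \<mu> \<tau>"
    proof -
      have "s \<le> (\<Sum>i\<in>V. \<mu> \<tau>)" unfolding s_def by (rule sum_mono) (use ub in force)
      also have "\<dots> = real (N - 1) * \<mu> \<tau>" using cardV by simp
      also have "\<dots> \<le> NN * \<mu> \<tau>" unfolding NN_def using mu0 by (intro mult_right_mono) auto
      finally show ?thesis .
    qed
    have Rb: "\<bar>R\<bar> \<le> Cc * \<mu> \<tau> * Q"
    proof -
      define M0 where "M0 = \<mu> \<tau> * real N * Q * 2^N"
      have Q0': "0 \<le> Q" unfolding Q_def by (simp add: sum_nonneg)
      have trm: "\<And>\<delta> S. \<bar>w S * rem u (V - S)\<bar> \<le> M0"
      proof -
        fix \<delta> S
        have w: "\<bar>w S\<bar> \<le> 1" unfolding w_def using x by (simp add: power_le_one)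
        have fin: "finite (V - S)" using finV by simp
        have r: "\<bar>rem u (V - S)\<bar> \<le> \<mu> \<tau> * real (card (V - S)) * (\<Sum>i\<in>V - S. (u i)^2) * (2 ^ card (V - S) - 1)"
          by (rule rem_bound[OF fin]) (use ub mu0 C2' in auto)
        have cle: "card (V - S) \<le> N" using card_mono[OF finV, of "V - S"] cardV by auto
        then have c: "real (card (V - S)) \<le> real N" by simp
        have q: "(\<Sum>i\<in>V - S. (u i)^2) \<le> Q" unfolding Q_def by (rule sum_mono2[OF finV]) auto
        have p: "(2::real) ^ card (V - S) - 1 \<le> 2^N"
        proof -
          have "(2::real) ^ card (V - S) \<le> 2^N" by (rule power_increasing[OF cle]) simp
          then show ?thesis by linarith
        qed
        have p0: "0 \<le> (2::real) ^ card (V - S) - 1" by simp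
        have s0: "0 \<le> (\<Sum>i\<in>V - S. (u i)^2)" by (simp add: sum_nonneg)
        have "\<mu> \<tau> * real (card (V - S)) * (\<Sum>i\<in>V - S. (u i)^2) * (2 ^ card (V - S) - 1) \<le> M0"
          unfolding M0_def using mu0 c q p p0 s0 Q0'
          by (intro mult_mono) (auto intro: mult_nonneg_nonneg)
        then have rr: "\<bar>rem u (V - S)\<bar> \<le> M0" using r by linarith
        have "\<bar>w S * rem u (V - S)\<bar> = \<bar>w S\<bar> * \<bar>rem u (V - S)\<bar>" by (simp add: abs_mult)
        also have "\<dots> \<le> 1 * M0" using w rr by (intro mult_mono) auto
        finally show "\<bar>w S * rem u (V - S)\<bar> \<le> M0" by simp
      qed
      have "\<bar>R\<bar> \<le> (\<Sum>\<delta>=1..\<kappa>. \<bar>Kc \<delta> * (\<Sum>S\<in>X \<delta>. w S * rem u (V - S))\<bar>)"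
        unfolding R_def by (rule sum_abs)
      also have "\<dots> \<le> (\<Sum>\<delta>=1..\<kappa>. \<bar>Kc \<delta>\<bar> * (real (card (X \<delta>)) * M0))"
      proof (rule sum_mono)
        fix \<delta>
        have "\<bar>(\<Sum>S\<in>X \<delta>. w S * rem u (V - S))\<bar> \<le> (\<Sum>S\<in>X \<delta>. \<bar>w S * rem u (V - S)\<bar>)" by (rule sum_abs)
        also have "\<dots> \<le> (\<Sum>S\<in>X \<delta>. M0)" by (rule sum_mono) (rule trm)
        finally have "\<bar>(\<Sum>S\<in>X \<delta>. w S * rem u (V - S))\<bar> \<le> real (card (X \<delta>)) * M0" by simp
        then show "\<bar>Kc \<delta> * (\<Sum>S\<in>X \<delta>. w S * rem u (V - S))\<bar> \<le> \<bar>Kc \<delta>\<bar> * (real (card (X \<delta>)) * M0)"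
          by (simp add: abs_mult mult_left_mono)
      qed
      also have "\<dots> = (\<Sum>\<delta>=1..\<kappa>. \<bar>Kc \<delta>\<bar> * real (card (X \<delta>))) * M0"
        by (simp add: sum_distrib_right mult.assoc)
      also have "\<dots> = Cc * \<mu> \<tau> * Q" unfolding Cc_def M0_def by (simp add: algebra_simps)
      finally show ?thesis .
    qed
    have Q0: "0 \<le> Q" unfolding Q_def by (simp add: sum_nonneg)
    have b0: "0 \<le> \<beta> \<tau>" unfolding \<beta>_def using C1' by simp
    have "0 \<le> c1 * s + c2 / 2 * (s^2 - Q) + R"
      by (rule final_ineq[OF sQ b0 Q0 sN _ Rb]) (use C3' C4' in auto)
    then show "eq_loss \<kappa> n \<epsilon> (qbar \<kappa>) \<le> eq_loss \<kappa> n \<epsilon> q'"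
      using rep'[OF q'] rep'[OF qbC] diff by simp
  qed
qed

end
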